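(* Let $(p_{i,j})_{1\le i\le j\le n}$ and $(p'_{i,j})_{1\le i\le j\le n}$ be two reduced families of primitive elements of ${\cal H}_R$, and let $(c_0,\dots,c_k)$ be the type of $(p_{i,j})$, with associated matrices ${\cal P},{\cal P}'$. Then $C_{(p_{i,j})}$ and $C_{(p'_{i,j})}$ are isomorphic comodules if and only if $(p_{i,j})$ and $(p'_{i,j})$ have the same type and there exists $g\in G_{(c_0,\dots,c_k)}$ such that ${\cal P}'=g{\cal P}g^{-1}$.
   Context: A rooted tree is a finite connected and simply connected graph with a distinguished vertex (the root), edges oriented away from the root. ${\cal H}_R$ is the commutative polynomial algebra over $\mathbb{Q}$ on the isomorphism classes of rooted trees; monomials are forests ($1$ is the empty forest), weight = number of vertices. An admissible cut $C$ of a tree $t$ is a nonempty set of edges such that every path from the root to a vertex contains at most one edge of $C$; removing them gives a forest with $R^C(t)$ the tree containing the root and $P^C(t)$ the product of the others. Coproduct: algebra morphism $\Delta$ with $\Delta(t)=1\otimes t+t\otimes1+\sum_CP^C(t)\otimes R^C(t)$; $Prim({\cal H}_R)$ = primitive elements. For forests $M,N$: $M\top N=0$ if $N=1$, else $M\top N=\frac{1}{weight(N)}\sum_vN_v$, $v$ over vertices of $N$, $N_v$ obtained by attaching every tree of $M$ to $v$; bilinear extension; $p_k\top\cdots\top p_1:=(p_k\top\cdots\top p_2)\top p_1$. ${\cal D}_{i,j}$ = set of partitions of $\{i,\dots,j\}$ into consecutive intervals $I_{i_1,j_1}\cdots I_{i_k,j_k}$ ($i=i_1\le j_1$, $i_{r+1}=j_r+1$,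 $j_k=j$). For a family $(p_{i,j})_{1\le i\le j\le n}$ of primitive elements, $C_{(p_{i,j})}$ is the left comodule with basis $e_0,\dots,e_n$, $\Delta(e_0)=1\otimes e_0$, $\Delta(e_i)=\sum_{j=0}^{i-1}\big(\sum_{{\cal D}_{j+1,i}}p_{i_k,j_k}\top\cdots\top p_{i_1,j_1}\big)\otimes e_j+1\otimes e_i$. The associated matrix ${\cal P}\in{\cal M}_{n+1}(Prim({\cal H}_R))$ (rows and columns indexed $0,\dots,n$) has entry $p_{r+1,c}$ at position $(r,c)$ if $c\ge r+1$, and $0$ otherwise. The family is reduced of type $(c_0,\dots,c_k)$ (positive integers with $c_0+\cdots+c_k=n+1$) if, cutting rows and columns into consecutive blocks of sizes $c_0,\dots,c_k$, all blocks on or below the block diagonal are zero and, for each $i=1,\dots,k$, the block in block-row $i-1$ and block-column $i$ (of size $c_{i-1}\times c_i$) has its $c_i$ columns linearly independent as elements of $Prim({\cal H}_R)^{c_{i-1}}$. $G_{(c_0,\dots,c_k)}\subset GL_{n+1}(\mathbb{Q})$ is the group of block upper triangular matrices with respect to these blocks whose diagonal blocks lie in $GL_{c_i}(\mathbb{Q})$; it acts by $g\cdot{\cal P}=g{\cal P}g^{-1}$. *)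

theory Defs
  imports Complex_Main "HOL-Library.Multiset" "HOL-Library.Poly_Mapping" "HOL-Library.Product_Plus"
begin

text \<open>Isomorphism classes of rooted trees: a root together with the (unordered)
 multiset of subtrees hanging at its children.\<close>
datatype tree = Node "tree multiset"

type_synonym forest = "tree multiset"

text \<open>H_R = commutative polynomial algebra over Q on trees = monoid algebra of the
 free commutative monoid of forests; the empty forest is 1.\<close>
type_synonym HR = "forest \<Rightarrow>\<^sub>0 rat"

text \<open>H_R \<otimes> H_R with basis forest \<otimes> forest (product componentwise).\<close>
type_synonym HR2 = "(forest \<times> forest) \<Rightarrow>\<^sub>0 rat"

primrec tweight :: "tree \<Rightarrow> nat" where
  "tweight (Node F) = Suc (sum_mset (image_mset tweight F))"

definition fweight :: "forest \<Rightarrow> nat" where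
  "fweight F = sum_mset (image_mset tweight F)"

definition scal :: "rat \<Rightarrow> ('a \<Rightarrow>\<^sub>0 rat) \<Rightarrow> ('a \<Rightarrow>\<^sub>0 rat)" where
  "scal c x = Poly_Mapping.map ((*) c) x"

definition tens :: "HR \<Rightarrow> HR \<Rightarrow> HR2" where
  "tens a b = (\<Sum>F\<in>Poly_Mapping.keys a. \<Sum>G\<in>Poly_Mapping.keys b. Poly_Mapping.single (F, G) (Poly_Mapping.lookup a F * Poly_Mapping.lookup b G))"

text \<open>Convolution of multisets of pairs of forests (combining independent choices).\<close>
definition mconv :: "(forest \<times> forest) multiset \<Rightarrow> (forest \<times> forest) multiset \<Rightarrow> (forest \<times> forest) multiset" where
  "mconv A B = sum_mset (image_mset (\<lambda>a. image_mset (\<lambda>b. a + b) B) A)"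

definition mconv_all :: "(forest \<times> forest) multiset multiset \<Rightarrow> (forest \<times> forest) multiset" where
  "mconv_all M = fold_mset mconv {#({#}, {#})#} M"

text \<open>acuts t: multiset, indexed by all sets C of edges of t (the empty set included)
 such that every path from the root contains at most one edge of C, of the pairs
 (P^C(t), R^C(t)).  An edge set of Node F is given by choosing, for each child
 subtree s, either to cut the edge from the root to s (then s falls entirely into
 P and nothing below may be cut), or not to cut it and to choose such an edge set
 inside s.\<close>
primrec acuts :: "tree \<Rightarrow> (forest \<times> tree) multiset" where
  "acuts (Node F) =
     image_mset (\<lambda>(P, K). (P, Node K))
       (mconv_all (image_mset (\<lambda>s. {#({#s#}, {#})#} +
            image_mset (\<lambda>(P, R). (P, {#R#})) (acuts s)) F))"

text \<open>Nonempty admissible cuts: remove the empty cut, whose pair is (1, t).\<close>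
definition adm_cuts :: "tree \<Rightarrow> (forest \<times> tree) multiset" where
  "adm_cuts t = acuts t - {#({#}, t)#}"

definition Delta_tree :: "tree \<Rightarrow> HR2" where
  "Delta_tree t = Poly_Mapping.single ({#}, {#t#}) 1 + Poly_Mapping.single ({#t#}, {#}) 1
     + sum_mset (image_mset (\<lambda>(P, R). Poly_Mapping.single (P, {#R#}) 1) (adm_cuts t))"

definition Delta_forest :: "forest \<Rightarrow> HR2" where
  "Delta_forest F = prod_mset (image_mset Delta_tree F)"

definition Delta :: "HR \<Rightarrow> HR2" where
  "Delta h = (\<Sum>F\<in>Poly_Mapping.keys h. scal (Poly_Mapping.lookup h F) (Delta_forest F))"

definition Prim :: "HR set" where
  "Prim = {p. Delta p = tens 1 p + tens p 1}"

text \<open>graft_tree M t: multiset over the vertices v of t of t_v (all trees of M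
 attached to v).\<close>
primrec graft_tree :: "forest \<Rightarrow> tree \<Rightarrow> tree multiset" where
  "graft_tree M (Node F) =
     {#Node (F + M)#} +
     sum_mset (image_mset (\<lambda>(s, G). image_mset (\<lambda>s'. Node (F - {#s#} + {#s'#})) G)
        (image_mset (\<lambda>s. (s, graft_tree M s)) F))"

definition graft_forest :: "forest \<Rightarrow> forest \<Rightarrow> forest multiset" where
  "graft_forest M N = sum_mset (image_mset (\<lambda>t. image_mset (\<lambda>t'. N - {#t#} + {#t'#}) (graft_tree M t)) N)"

definition top_forest :: "forest \<Rightarrow> forest \<Rightarrow> HR" where
  "top_forest M N = (if N = {#} then 0 else
      scal (1 / of_nat (fweight N)) (sum_mset (image_mset (\<lambda>N'. Poly_Mapping.single N' 1) (graft_forest M N))))"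

definition top :: "HR \<Rightarrow> HR \<Rightarrow> HR" (infixl "\<top>" 70) where
  "a \<top> b = (\<Sum>M\<in>Poly_Mapping.keys a. \<Sum>N\<in>Poly_Mapping.keys b. scal (Poly_Mapping.lookup a M * Poly_Mapping.lookup b N) (top_forest M N))"

text \<open>D_{a,b}: lists [(i_1,j_1),...,(i_k,j_k)] of consecutive intervals covering {a..b}.\<close>
definition Dset :: "nat \<Rightarrow> nat \<Rightarrow> (nat \<times> nat) list set" where
  "Dset a b = {xs. xs \<noteq> [] \<and> fst (xs ! 0) = a \<and> snd (last xs) = b
       \<and> (\<forall>r < length xs. fst (xs ! r) \<le> snd (xs ! r))
       \<and> (\<forall>r. Suc r < length xs \<longrightarrow> fst (xs ! Suc r) = Suc (snd (xs ! r)))}"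

text \<open>top_iter p [(i_1,j_1),...,(i_k,j_k)] = p_{i_k,j_k} top ... top p_{i_1,j_1},
 bracketed as (p_k top ... top p_2) top p_1.\<close>
fun top_iter :: "(nat \<Rightarrow> nat \<Rightarrow> HR) \<Rightarrow> (nat \<times> nat) list \<Rightarrow> HR" where
  "top_iter p [] = 0"
| "top_iter p [x] = p (fst x) (snd x)"
| "top_iter p (x # y # xs) = top_iter p (y # xs) \<top> p (fst x) (snd x)"

text \<open>Coefficient of e_j in Delta(e_i).\<close>
definition coef :: "(nat \<Rightarrow> nat \<Rightarrow> HR) \<Rightarrow> nat \<Rightarrow> nat \<Rightarrow> HR" where
  "coef p i j = (if j < i then (\<Sum>xs\<in>Dset (Suc j) i. top_iter p xs)
                 else if j = i then 1 else 0)"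

text \<open>The comodule C_(p): the Q-vector space with basis e_0..e_n, elements are
 finitely supported coefficient functions on {0..n}; H_R \<otimes> C has basis
 (forest, j).\<close>
definition Cspace :: "nat \<Rightarrow> (nat \<Rightarrow>\<^sub>0 rat) set" where
  "Cspace n = {x. Poly_Mapping.keys x \<subseteq> {..n}}"

definition tensC :: "HR \<Rightarrow> (nat \<Rightarrow>\<^sub>0 rat) \<Rightarrow> ((forest \<times> nat) \<Rightarrow>\<^sub>0 rat)" where
  "tensC h x = (\<Sum>F\<in>Poly_Mapping.keys h. \<Sum>j\<in>Poly_Mapping.keys x. Poly_Mapping.single (F, j) (Poly_Mapping.lookup h F * Poly_Mapping.lookup x j))"

definition coact_basis :: "(nat \<Rightarrow> nat \<Rightarrow> HR) \<Rightarrow> nat \<Rightarrow> ((forest \<times> nat) \<Rightarrow>\<^sub>0 rat)" where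
  "coact_basis p i = (\<Sum>j\<le>i. tensC (coef p i j) (Poly_Mapping.single j 1))"

definition coact :: "(nat \<Rightarrow> nat \<Rightarrow> HR) \<Rightarrow> (nat \<Rightarrow>\<^sub>0 rat) \<Rightarrow> ((forest \<times> nat) \<Rightarrow>\<^sub>0 rat)" where
  "coact p x = (\<Sum>i\<in>Poly_Mapping.keys x. scal (Poly_Mapping.lookup x i) (coact_basis p i))"

text \<open>id \<otimes> phi on H_R \<otimes> C, for a linear phi (determined by the images of basis vectors).\<close>
definition id_tens :: "((nat \<Rightarrow>\<^sub>0 rat) \<Rightarrow> (nat \<Rightarrow>\<^sub>0 rat)) \<Rightarrow> ((forest \<times> nat) \<Rightarrow>\<^sub>0 rat) \<Rightarrow> ((forest \<times> nat) \<Rightarrow>\<^sub>0 rat)" where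
  "id_tens \<phi> y = (\<Sum>(F, j)\<in>Poly_Mapping.keys y. scal (Poly_Mapping.lookup y (F, j))
       (tensC (Poly_Mapping.single F 1) (\<phi> (Poly_Mapping.single j 1))))"

definition lin_on :: "nat \<Rightarrow> ((nat \<Rightarrow>\<^sub>0 rat) \<Rightarrow> (nat \<Rightarrow>\<^sub>0 rat)) \<Rightarrow> bool" where
  "lin_on n \<phi> \<longleftrightarrow> (\<forall>x\<in>Cspace n. \<forall>y\<in>Cspace n. \<phi> (x + y) = \<phi> x + \<phi> y)
                  \<and> (\<forall>c. \<forall>x\<in>Cspace n. \<phi> (scal c x) = scal c (\<phi> x))"

definition comod_iso :: "nat \<Rightarrow> (nat \<Rightarrow> nat \<Rightarrow> HR) \<Rightarrow> (nat \<Rightarrow> nat \<Rightarrow> HR) \<Rightarrow> bool" where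
  "comod_iso n p p' \<longleftrightarrow> (\<exists>\<phi>. lin_on n \<phi> \<and> bij_betw \<phi> (Cspace n) (Cspace n)
       \<and> (\<forall>x\<in>Cspace n. coact p' (\<phi> x) = id_tens \<phi> (coact p x)))"

definition prim_family :: "nat \<Rightarrow> (nat \<Rightarrow> nat \<Rightarrow> HR) \<Rightarrow> bool" where
  "prim_family n p \<longleftrightarrow> (\<forall>i j. 1 \<le> i \<and> i \<le> j \<and> j \<le> n \<longrightarrow> p i j \<in> Prim)"

text \<open>Associated matrix, rows/columns 0..n.\<close>
definition assoc_mat :: "(nat \<Rightarrow> nat \<Rightarrow> HR) \<Rightarrow> nat \<Rightarrow> nat \<Rightarrow> HR" where
  "assoc_mat p r c = (if Suc r \<le> c then p (Suc r) c else 0)"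

text \<open>Start index of block i for block sizes cs = [c_0,...,c_k].\<close>
definition bstart :: "nat list \<Rightarrow> nat \<Rightarrow> nat" where
  "bstart cs i = sum_list (take i cs)"

definition blk :: "nat list \<Rightarrow> nat \<Rightarrow> nat set" where
  "blk cs i = {bstart cs i ..< bstart cs (Suc i)}"

definition is_type :: "nat \<Rightarrow> nat list \<Rightarrow> bool" where
  "is_type n cs \<longleftrightarrow> cs \<noteq> [] \<and> (\<forall>c\<in>set cs. 0 < c) \<and> sum_list cs = Suc n"

definition reduced_of_type :: "nat \<Rightarrow> (nat \<Rightarrow> nat \<Rightarrow> HR) \<Rightarrow> nat list \<Rightarrow> bool" where
  "reduced_of_type n p cs \<longleftrightarrow> is_type n cs
     \<and> (\<forall>a<length cs. \<forall>b<length cs. b \<le> a \<longrightarrow>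
          (\<forall>r\<in>blk cs a. \<forall>c\<in>blk cs b. assoc_mat p r c = 0))
     \<and> (\<forall>i. 1 \<le> i \<and> i < length cs \<longrightarrow>
          (\<forall>lam :: nat \<Rightarrow> rat.
             (\<forall>r\<in>blk cs (i - 1). (\<Sum>c\<in>blk cs i. scal (lam c) (assoc_mat p r c)) = 0)
             \<longrightarrow> (\<forall>c\<in>blk cs i. lam c = 0)))"

definition is_reduced :: "nat \<Rightarrow> (nat \<Rightarrow> nat \<Rightarrow> HR) \<Rightarrow> bool" where
  "is_reduced n p \<longleftrightarrow> (\<exists>cs. reduced_of_type n p cs)"

definition mat_inverse_on :: "nat set \<Rightarrow> (nat \<Rightarrow> nat \<Rightarrow> rat) \<Rightarrow> (nat \<Rightarrow> nat \<Rightarrow> rat) \<Rightarrow> bool" where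
  "mat_inverse_on I g h \<longleftrightarrow>
     (\<forall>r\<in>I. \<forall>c\<in>I. (\<Sum>k\<in>I. g r k * h k c) = (if r = c then 1 else 0))
   \<and> (\<forall>r\<in>I. \<forall>c\<in>I. (\<Sum>k\<in>I. h r k * g k c) = (if r = c then 1 else 0))"

text \<open>G_(c_0,...,c_k): invertible (n+1)x(n+1) rational matrices, block upper triangular
 with respect to the blocks, with invertible diagonal blocks.\<close>
definition Gtype :: "nat \<Rightarrow> nat list \<Rightarrow> (nat \<Rightarrow> nat \<Rightarrow> rat) set" where
  "Gtype n cs = {g. (\<exists>h. mat_inverse_on {..n} g h)
      \<and> (\<forall>a<length cs. \<forall>b<length cs. b < a \<longrightarrow> (\<forall>r\<in>blk cs a. \<forall>c\<in>blk cs b. g r c = 0))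
      \<and> (\<forall>a<length cs. \<exists>h. mat_inverse_on (blk cs a) g h)}"

definition conj_mat :: "nat \<Rightarrow> (nat \<Rightarrow> nat \<Rightarrow> rat) \<Rightarrow> (nat \<Rightarrow> nat \<Rightarrow> HR) \<Rightarrow> (nat \<Rightarrow> nat \<Rightarrow> rat) \<Rightarrow> nat \<Rightarrow> nat \<Rightarrow> HR" where
  "conj_mat n g P h r c = (\<Sum>k\<le>n. \<Sum>l\<le>n. scal (g r k * h l c) (P k l))"

end

theory Submission
  imports Defs
begin


lemma lookup_scal [simp]: "Poly_Mapping.lookup (scal c x) k = c * Poly_Mapping.lookup x k"
  by (simp add: scal_def Poly_Mapping.map.rep_eq when_def)

lemma scal_add_right: "scal c (x + y) = scal c x + scal c y"
  by (rule poly_mapping_eqI) (simp add: lookup_add algebra_simps)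
lemma scal_add_left: "scal (c + d) x = scal c x + scal d x"
  by (rule poly_mapping_eqI) (simp add: lookup_add algebra_simps)
lemma scal_scal [simp]: "scal c (scal d x) = scal (c * d) x"
  by (rule poly_mapping_eqI) simp
lemma scal_one [simp]: "scal 1 x = x"
  by (rule poly_mapping_eqI) simp
lemma scal_zero_left [simp]: "scal 0 x = 0"
  by (rule poly_mapping_eqI) simp
lemma scal_zero_right [simp]: "scal c 0 = 0"
  by (rule poly_mapping_eqI) simp
lemma scal_sum_right: "scal c (sum f A) = (\<Sum>a\<in>A. scal c (f a))"
  by (rule poly_mapping_eqI) (simp add: lookup_sum sum_distrib_left)
lemma scal_sum_left: "scal (sum f A) x = (\<Sum>a\<in>A. scal (f a) x)"
  by (rule poly_mapping_eqI) (simp add: lookup_sum sum_distrib_right)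
lemma scal_diff_right: "scal c (x - y) = scal c x - scal c y"
  by (rule poly_mapping_eqI) (simp add: lookup_minus algebra_simps)
lemma keys_scal: "Poly_Mapping.keys (scal c x) \<subseteq> Poly_Mapping.keys x"
  by (auto simp: in_keys_iff)

lemma top_alt:
  assumes "finite S" "Poly_Mapping.keys a \<subseteq> S" "finite T" "Poly_Mapping.keys b \<subseteq> T"
  shows "a \<top> b = (\<Sum>M\<in>S. \<Sum>N\<in>T. scal (Poly_Mapping.lookup a M * Poly_Mapping.lookup b N) (top_forest M N))"
proof -
  have "a \<top> b = (\<Sum>M\<in>S. \<Sum>N\<in>Poly_Mapping.keys b. scal (Poly_Mapping.lookup a M * Poly_Mapping.lookup b N) (top_forest M N))"
    unfolding top_def
    by (rule sum.mono_neutral_left) (use assms in \<open>auto simp: in_keys_iff\<close>)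
  also have "\<dots> = (\<Sum>M\<in>S. \<Sum>N\<in>T. scal (Poly_Mapping.lookup a M * Poly_Mapping.lookup b N) (top_forest M N))"
    by (rule sum.cong[OF refl], rule sum.mono_neutral_left) (use assms in \<open>auto simp: in_keys_iff\<close>)
  finally show ?thesis .
qed

lemma top_add_left: "(a + a') \<top> b = a \<top> b + a' \<top> b"
proof -
  let ?S = "Poly_Mapping.keys a \<union> Poly_Mapping.keys a'"
  have k: "Poly_Mapping.keys (a + a') \<subseteq> ?S" by (rule keys_add)
  show ?thesis
    apply (subst top_alt[of ?S _ "Poly_Mapping.keys b"], simp, rule k, simp, simp)
    apply (subst top_alt[of ?S _ "Poly_Mapping.keys b"], simp, simp, simp, simp)
    apply (subst top_alt[of ?S _ "Poly_Mapping.keys b"], simp, simp, simp, simp)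
    by (simp add: lookup_add algebra_simps scal_add_left sum.distrib)
qed

lemma top_add_right: "a \<top> (b + b') = a \<top> b + a \<top> b'"
proof -
  let ?S = "Poly_Mapping.keys b \<union> Poly_Mapping.keys b'"
  have k: "Poly_Mapping.keys (b + b') \<subseteq> ?S" by (rule keys_add)
  show ?thesis
    apply (subst top_alt[of "Poly_Mapping.keys a" _ ?S], simp, simp, simp, rule k)
    apply (subst top_alt[of "Poly_Mapping.keys a" _ ?S], simp, simp, simp, simp)
    apply (subst top_alt[of "Poly_Mapping.keys a" _ ?S], simp, simp, simp, simp)
    by (simp add: lookup_add algebra_simps scal_add_left sum.distrib)
qed

lemma top_scal_left: "scal c a \<top> b = scal c (a \<top> b)"
  apply (subst top_alt[of "Poly_Mapping.keys a" _ "Poly_Mapping.keys b"], simp, rule keys_scal, simp, simp)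
  apply (subst top_alt[of "Poly_Mapping.keys a" _ "Poly_Mapping.keys b"], simp, simp, simp, simp)
  by (simp add: scal_sum_right mult.assoc)

lemma top_scal_right: "a \<top> scal c b = scal c (a \<top> b)"
  apply (subst top_alt[of "Poly_Mapping.keys a" _ "Poly_Mapping.keys b"], simp, simp, simp, rule keys_scal)
  apply (subst top_alt[of "Poly_Mapping.keys a" _ "Poly_Mapping.keys b"], simp, simp, simp, simp)
  by (simp add: scal_sum_right mult.assoc mult.left_commute)

lemma top_zero_left [simp]: "0 \<top> b = 0"
  by (simp add: top_def)
lemma top_zero_right [simp]: "a \<top> 0 = 0"
  by (simp add: top_def)

lemma top_sum_left: "(sum f A) \<top> b = (\<Sum>x\<in>A. f x \<top> b)"
  by (induction A rule: infinite_finite_induct) (auto simp: top_add_left)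
lemma top_sum_right: "a \<top> (sum f A) = (\<Sum>x\<in>A. a \<top> f x)"
  by (induction A rule: infinite_finite_induct) (auto simp: top_add_right)

lemma top_diff_left: "(a - a') \<top> b = a \<top> b - a' \<top> b"
  by (metis add_diff_cancel diff_add_cancel top_add_left)



lemma allSuc_conv: "(\<forall>k < Suc n. P k) \<longleftrightarrow> P 0 \<and> (\<forall>k<n. P (Suc k))"
  using less_Suc_eq_0_disj by auto

lemma Dset_Nil [simp]: "[] \<notin> Dset a b"
  by (simp add: Dset_def)

lemma Dset_single: "[x] \<in> Dset a b \<longleftrightarrow> x = (a, b) \<and> a \<le> b"
  by (cases x) (auto simp: Dset_def)

lemma Dset_cons2: "x # y # r \<in> Dset a b \<longleftrightarrow> fst x = a \<and> fst x \<le> snd x \<and> y # r \<in> Dset (Suc (snd x)) b"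
proof -
  have A: "(\<forall>k < length (x # y # r). fst ((x # y # r) ! k) \<le> snd ((x # y # r) ! k)) \<longleftrightarrow>
      fst x \<le> snd x \<and> (\<forall>k < length (y # r). fst ((y # r) ! k) \<le> snd ((y # r) ! k))"
    by (simp only: length_Cons allSuc_conv nth_Cons_0 nth_Cons_Suc)
  have B: "(\<forall>k. Suc k < length (x # y # r) \<longrightarrow> fst ((x # y # r) ! Suc k) = Suc (snd ((x # y # r) ! k))) \<longleftrightarrow>
      fst y = Suc (snd x) \<and> (\<forall>k. Suc k < length (y # r) \<longrightarrow> fst ((y # r) ! Suc k) = Suc (snd ((y # r) ! k)))"
    apply (rule iffI)
     apply (intro conjI allI impI)
      apply (drule spec[of _ 0], simp)
     apply (drule_tac x="Suc k" in spec, simp)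
    apply (intro allI impI)
    subgoal for k by (cases k) auto
    done
  show ?thesis unfolding Dset_def using A B by auto
qed

lemma Dset_le: "xs \<in> Dset a b \<Longrightarrow> a \<le> b"
proof (induction xs arbitrary: a)
  case Nil then show ?case by simp
next
  case (Cons x xs)
  show ?case
  proof (cases xs)
    case Nil with Cons.prems show ?thesis by (simp add: Dset_single)
  next
    case (Cons y r)
    with Cons.prems have "fst x = a" "fst x \<le> snd x" "xs \<in> Dset (Suc (snd x)) b"
      by (auto simp: Dset_cons2)
    with Cons.IH show ?thesis by fastforce
  qed
qed

lemma Dset_rec: "a \<le> b \<Longrightarrow> Dset a b = {[(a, b)]} \<union> (\<Union>m\<in>{a..<b}. (\<lambda>r. (a, m) # r) ` Dset (Suc m) b)"
proof (intro set_eqI iffI)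
  fix xs assume ab: "a \<le> b" and xs: "xs \<in> Dset a b"
  show "xs \<in> {[(a, b)]} \<union> (\<Union>m\<in>{a..<b}. (\<lambda>r. (a, m) # r) ` Dset (Suc m) b)"
  proof (cases xs)
    case Nil with xs show ?thesis by simp
  next
    case (Cons x r)
    show ?thesis
    proof (cases r)
      case Nil with Cons xs show ?thesis by (simp add: Dset_single)
    next
      case (Cons y r')
      with \<open>xs = x # r\<close> xs have h: "fst x = a" "fst x \<le> snd x" "r \<in> Dset (Suc (snd x)) b"
        by (auto simp: Dset_cons2)
      from Dset_le[OF h(3)] have "snd x < b" by simp
      with h \<open>xs = x # r\<close> show ?thesis
        by (cases x) auto
    qed
  qed
next
  fix xs assume ab: "a \<le> b" and xs: "xs \<in> {[(a, b)]} \<union> (\<Union>m\<in>{a..<b}. (\<lambda>r. (a, m) # r) ` Dset (Suc m) b)"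
  then consider "xs = [(a, b)]" | "xs \<in> (\<Union>m\<in>{a..<b}. (\<lambda>r. (a, m) # r) ` Dset (Suc m) b)" by blast
  then show "xs \<in> Dset a b"
  proof cases
    case 1 with ab show ?thesis by (simp add: Dset_single)
  next
    case 2
    then obtain m r where m: "a \<le> m" "m < b" and r: "r \<in> Dset (Suc m) b" and xsr: "xs = (a, m) # r" by auto
    obtain y r' where "r = y # r'" using r by (cases r) auto
    with m r xsr show ?thesis by (simp add: Dset_cons2)
  qed
qed

lemma Dset_empty: "b < a \<Longrightarrow> Dset a b = {}"
  using Dset_le by fastforce

lemma finite_Dset: "finite (Dset a b)"
proof (induction "Suc b - a" arbitrary: a rule: less_induct)
  case less
  show ?case
  proof (cases "a \<le> b")
    case False then show ?thesis by (simp add: Dset_empty)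
  next
    case True
    have "finite (Dset (Suc m) b)" if "m \<in> {a..<b}" for m
      using that by (intro less) auto
    then show ?thesis using True by (subst Dset_rec) auto
  qed
qed

lemma coef_rec:
  assumes "j < i"
  shows "coef p i j = p (Suc j) i + (\<Sum>m\<in>{Suc j..<i}. coef p i m \<top> p (Suc j) m)"
proof -
  have ab: "Suc j \<le> i" using assms by simp
  have disj1: "{[(Suc j, i)]} \<inter> (\<Union>m\<in>{Suc j..<i}. (\<lambda>r. (Suc j, m) # r) ` Dset (Suc m) i) = {}"
    by auto
  have inner: "(\<Sum>xs\<in>(\<lambda>r. (Suc j, m) # r) ` Dset (Suc m) i. top_iter p xs) = coef p i m \<top> p (Suc j) m"
    if m: "m \<in> {Suc j..<i}" for m
  proof -
    have "(\<Sum>xs\<in>(\<lambda>r. (Suc j, m) # r) ` Dset (Suc m) i. top_iter p xs)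
        = (\<Sum>r\<in>Dset (Suc m) i. top_iter p ((Suc j, m) # r))"
      by (subst sum.reindex) (auto simp: inj_on_def)
    also have "\<dots> = (\<Sum>r\<in>Dset (Suc m) i. top_iter p r \<top> p (Suc j) m)"
    proof (rule sum.cong[OF refl])
      fix r assume "r \<in> Dset (Suc m) i"
      then obtain y r' where "r = y # r'" by (cases r) auto
      then show "top_iter p ((Suc j, m) # r) = top_iter p r \<top> p (Suc j) m" by simp
    qed
    also have "\<dots> = coef p i m \<top> p (Suc j) m"
      using m by (simp add: coef_def top_sum_left)
    finally show ?thesis .
  qed
  have "coef p i j = (\<Sum>xs\<in>Dset (Suc j) i. top_iter p xs)"
    using assms by (simp add: coef_def)
  also have "\<dots> = (\<Sum>xs\<in>{[(Suc j, i)]}. top_iter p xs) + (\<Sum>xs\<in>(\<Union>m\<in>{Suc j..<i}. (\<lambda>r. (Suc j, m) # r) ` Dset (Suc m) i). top_iter p xs)"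
    apply (subst Dset_rec[OF ab])
    apply (rule sum.union_disjoint)
    using finite_Dset by auto
  also have "(\<Sum>xs\<in>(\<Union>m\<in>{Suc j..<i}. (\<lambda>r. (Suc j, m) # r) ` Dset (Suc m) i). top_iter p xs)
      = (\<Sum>m\<in>{Suc j..<i}. \<Sum>xs\<in>(\<lambda>r. (Suc j, m) # r) ` Dset (Suc m) i. top_iter p xs)"
    by (rule sum.UNION_disjoint) (auto simp: finite_Dset)
  also have "\<dots> = (\<Sum>m\<in>{Suc j..<i}. coef p i m \<top> p (Suc j) m)"
    using inner by simp
  finally show ?thesis by simp
qed



definition Mm :: "(nat \<Rightarrow> nat \<Rightarrow> HR) \<Rightarrow> nat \<Rightarrow> nat \<Rightarrow> HR" where
  "Mm p j i = (if j < i then coef p i j else 0)"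

definition rel :: "nat \<Rightarrow> (nat \<Rightarrow> nat \<Rightarrow> HR) \<Rightarrow> (nat \<Rightarrow> nat \<Rightarrow> HR) \<Rightarrow> bool" where
  "rel n X Q \<longleftrightarrow> (\<forall>j\<le>n. \<forall>i\<le>n. X j i = Q j i + (\<Sum>m\<le>n. X m i \<top> Q j m))"

lemma MREC: "rel n (Mm p) (assoc_mat p)"
  unfolding rel_def
proof (intro allI impI)
  fix j i assume j: "j \<le> n" and i: "i \<le> n"
  show "Mm p j i = assoc_mat p j i + (\<Sum>m\<le>n. Mm p m i \<top> assoc_mat p j m)"
  proof (cases "j < i")
    case True
    have "(\<Sum>m\<le>n. Mm p m i \<top> assoc_mat p j m) = (\<Sum>m\<le>n. if m \<in> {Suc j..<i} then coef p i m \<top> p (Suc j) m else 0)"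
      by (rule sum.cong) (auto simp: Mm_def assoc_mat_def)
    also have "\<dots> = (\<Sum>m\<in>{..n} \<inter> {Suc j..<i}. coef p i m \<top> p (Suc j) m)"
      by (simp add: sum.inter_restrict)
    also have "{..n} \<inter> {Suc j..<i} = {Suc j..<i}" using i by auto
    finally show ?thesis using True coef_rec[OF True, of p]
      by (simp add: Mm_def assoc_mat_def)
  next
    case False
    have "(\<Sum>m\<le>n. Mm p m i \<top> assoc_mat p j m) = 0"
      by (rule sum.neutral) (use False in \<open>auto simp: Mm_def assoc_mat_def\<close>)
    with False show ?thesis by (simp add: Mm_def assoc_mat_def)
  qed
qed

lemma UNIQ1:
  assumes X: "rel n X Q" and Y: "rel n Y Q" and Q: "\<And>j m. m \<le> j \<Longrightarrow> Q j m = 0"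
  shows "j \<le> n \<Longrightarrow> i \<le> n \<Longrightarrow> X j i = Y j i"
proof (induction "n - j" arbitrary: j rule: less_induct)
  case less
  have "(\<Sum>m\<le>n. X m i \<top> Q j m) = (\<Sum>m\<le>n. Y m i \<top> Q j m)"
  proof (rule sum.cong[OF refl])
    fix m assume m: "m \<in> {..n}"
    show "X m i \<top> Q j m = Y m i \<top> Q j m"
    proof (cases "m \<le> j")
      case True then show ?thesis by (simp add: Q)
    next
      case False then show ?thesis using m less by (subst less.hyps) auto
    qed
  qed
  then show ?case using X Y less.prems unfolding rel_def by metis
qed

lemma UNIQ2:
  assumes Q1: "rel n X Q1" and Q2: "rel n X Q2" and X: "\<And>m i. i \<le> m \<Longrightarrow> X m i = 0"
  shows "j \<le> n \<Longrightarrow> i \<le> n \<Longrightarrow> Q1 j i = Q2 j i"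
proof (induction i arbitrary: j rule: less_induct)
  case (less i)
  have "(\<Sum>m\<le>n. X m i \<top> Q1 j m) = (\<Sum>m\<le>n. X m i \<top> Q2 j m)"
  proof (rule sum.cong[OF refl])
    fix m assume m: "m \<in> {..n}"
    show "X m i \<top> Q1 j m = X m i \<top> Q2 j m"
    proof (cases "i \<le> m")
      case True then show ?thesis by (simp add: X)
    next
      case False then show ?thesis using m less by (subst less.IH) auto
    qed
  qed
  moreover have "X j i = Q1 j i + (\<Sum>m\<le>n. X m i \<top> Q1 j m)" "X j i = Q2 j i + (\<Sum>m\<le>n. X m i \<top> Q2 j m)"
    using Q1 Q2 less.prems unfolding rel_def by blast+
  ultimately show ?case by (metis add_right_cancel)
qed

lemma swap5: "(\<Sum>m\<in>A. \<Sum>a\<in>A. \<Sum>b\<in>A. \<Sum>c\<in>A. \<Sum>d\<in>A. F m a b c d) = (\<Sum>a\<in>A. \<Sum>b\<in>A. \<Sum>c\<in>A. \<Sum>d\<in>A. \<Sum>m\<in>A. F m a b c d)"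
proof -
  have "(\<Sum>m\<in>A. \<Sum>a\<in>A. \<Sum>b\<in>A. \<Sum>c\<in>A. \<Sum>d\<in>A. F m a b c d) = (\<Sum>a\<in>A. \<Sum>m\<in>A. \<Sum>b\<in>A. \<Sum>c\<in>A. \<Sum>d\<in>A. F m a b c d)"
    by (rule sum.swap)
  also have "\<dots> = (\<Sum>a\<in>A. \<Sum>b\<in>A. \<Sum>m\<in>A. \<Sum>c\<in>A. \<Sum>d\<in>A. F m a b c d)"
    by (rule sum.cong[OF refl], rule sum.swap)
  also have "\<dots> = (\<Sum>a\<in>A. \<Sum>b\<in>A. \<Sum>c\<in>A. \<Sum>m\<in>A. \<Sum>d\<in>A. F m a b c d)"
    by (rule sum.cong[OF refl], rule sum.cong[OF refl], rule sum.swap)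
  also have "\<dots> = (\<Sum>a\<in>A. \<Sum>b\<in>A. \<Sum>c\<in>A. \<Sum>d\<in>A. \<Sum>m\<in>A. F m a b c d)"
    by (rule sum.cong[OF refl], rule sum.cong[OF refl], rule sum.cong[OF refl], rule sum.swap)
  finally show ?thesis .
qed

lemma swap5b: "(\<Sum>m\<in>A. \<Sum>c\<in>A. \<Sum>d\<in>A. \<Sum>a\<in>A. \<Sum>b\<in>A. F m a b c d) = (\<Sum>m\<in>A. \<Sum>a\<in>A. \<Sum>b\<in>A. \<Sum>c\<in>A. \<Sum>d\<in>A. F m a b c d)"
proof -
  have "\<And>m c. (\<Sum>d\<in>A. \<Sum>a\<in>A. \<Sum>b\<in>A. F m a b c d) = (\<Sum>a\<in>A. \<Sum>b\<in>A. \<Sum>d\<in>A. F m a b c d)"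
  proof -
    fix m c
    have "(\<Sum>d\<in>A. \<Sum>a\<in>A. \<Sum>b\<in>A. F m a b c d) = (\<Sum>a\<in>A. \<Sum>d\<in>A. \<Sum>b\<in>A. F m a b c d)"
      by (rule sum.swap)
    also have "\<dots> = (\<Sum>a\<in>A. \<Sum>b\<in>A. \<Sum>d\<in>A. F m a b c d)"
      by (rule sum.cong[OF refl], rule sum.swap)
    finally show "(\<Sum>d\<in>A. \<Sum>a\<in>A. \<Sum>b\<in>A. F m a b c d) = (\<Sum>a\<in>A. \<Sum>b\<in>A. \<Sum>d\<in>A. F m a b c d)" .
  qed
  then have "(\<Sum>m\<in>A. \<Sum>c\<in>A. \<Sum>d\<in>A. \<Sum>a\<in>A. \<Sum>b\<in>A. F m a b c d) = (\<Sum>m\<in>A. \<Sum>c\<in>A. \<Sum>a\<in>A. \<Sum>b\<in>A. \<Sum>d\<in>A. F m a b c d)"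
    by simp
  also have "\<And>m. (\<Sum>c\<in>A. \<Sum>a\<in>A. \<Sum>b\<in>A. \<Sum>d\<in>A. F m a b c d) = (\<Sum>a\<in>A. \<Sum>b\<in>A. \<Sum>c\<in>A. \<Sum>d\<in>A. F m a b c d)"
  proof -
    fix m
    have "(\<Sum>c\<in>A. \<Sum>a\<in>A. \<Sum>b\<in>A. \<Sum>d\<in>A. F m a b c d) = (\<Sum>a\<in>A. \<Sum>c\<in>A. \<Sum>b\<in>A. \<Sum>d\<in>A. F m a b c d)"
      by (rule sum.swap)
    also have "\<dots> = (\<Sum>a\<in>A. \<Sum>b\<in>A. \<Sum>c\<in>A. \<Sum>d\<in>A. F m a b c d)"
      by (rule sum.cong[OF refl], rule sum.swap)
    finally show "(\<Sum>c\<in>A. \<Sum>a\<in>A. \<Sum>b\<in>A. \<Sum>d\<in>A. F m a b c d) = (\<Sum>a\<in>A. \<Sum>b\<in>A. \<Sum>c\<in>A. \<Sum>d\<in>A. F m a b c d)" .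
  qed
  then have "(\<Sum>m\<in>A. \<Sum>c\<in>A. \<Sum>a\<in>A. \<Sum>b\<in>A. \<Sum>d\<in>A. F m a b c d) = (\<Sum>m\<in>A. \<Sum>a\<in>A. \<Sum>b\<in>A. \<Sum>c\<in>A. \<Sum>d\<in>A. F m a b c d)"
    by simp
  finally show ?thesis .
qed

lemma CONJ:
  assumes inv: "mat_inverse_on {..n} \<Phi> \<Psi>" and R: "rel n X Q"
  shows "rel n (conj_mat n \<Phi> X \<Psi>) (conj_mat n \<Phi> Q \<Psi>)"
  unfolding rel_def
proof (intro allI impI)
  fix j i assume j: "j \<le> n" and i: "i \<le> n"
  let ?A = "{..n}"
  have inv2: "\<And>d a. d \<le> n \<Longrightarrow> a \<le> n \<Longrightarrow> (\<Sum>m\<le>n. \<Psi> d m * \<Phi> m a) = (if d = a then 1 else 0)"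
    using inv unfolding mat_inverse_on_def by auto
  have "(\<Sum>m\<le>n. conj_mat n \<Phi> X \<Psi> m i \<top> conj_mat n \<Phi> Q \<Psi> j m)
     = (\<Sum>m\<in>?A. \<Sum>c\<in>?A. \<Sum>d\<in>?A. \<Sum>a\<in>?A. \<Sum>b\<in>?A. scal (\<Psi> d m * \<Phi> m a * (\<Phi> j c * \<Psi> b i)) (X a b \<top> Q c d))"
    by (simp add: conj_mat_def top_sum_left top_sum_right top_scal_left top_scal_right scal_sum_right mult_ac)
  also have "\<dots> = (\<Sum>m\<in>?A. \<Sum>a\<in>?A. \<Sum>b\<in>?A. \<Sum>c\<in>?A. \<Sum>d\<in>?A. scal (\<Psi> d m * \<Phi> m a * (\<Phi> j c * \<Psi> b i)) (X a b \<top> Q c d))"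
    by (rule swap5b)
  also have "\<dots> = (\<Sum>a\<in>?A. \<Sum>b\<in>?A. \<Sum>c\<in>?A. \<Sum>d\<in>?A. \<Sum>m\<in>?A. scal (\<Psi> d m * \<Phi> m a * (\<Phi> j c * \<Psi> b i)) (X a b \<top> Q c d))"
    by (rule swap5)
  also have "\<dots> = (\<Sum>a\<in>?A. \<Sum>b\<in>?A. \<Sum>c\<in>?A. \<Sum>d\<in>?A. if d = a then scal (\<Phi> j c * \<Psi> b i) (X a b \<top> Q c d) else 0)"
  proof (intro sum.cong refl)
    fix a b c d assume "a \<in> ?A" "d \<in> ?A"
    then show "(\<Sum>m\<in>?A. scal (\<Psi> d m * \<Phi> m a * (\<Phi> j c * \<Psi> b i)) (X a b \<top> Q c d)) =
        (if d = a then scal (\<Phi> j c * \<Psi> b i) (X a b \<top> Q c d) else 0)"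
      by (simp add: scal_sum_left[symmetric] sum_distrib_right[symmetric] inv2)
  qed
  also have "\<dots> = (\<Sum>a\<in>?A. \<Sum>b\<in>?A. \<Sum>c\<in>?A. scal (\<Phi> j c * \<Psi> b i) (X a b \<top> Q c a))"
    by (simp add: sum.delta')
  also have "\<dots> = (\<Sum>b\<in>?A. \<Sum>c\<in>?A. \<Sum>a\<in>?A. scal (\<Phi> j c * \<Psi> b i) (X a b \<top> Q c a))"
  proof -
    have "(\<Sum>a\<in>?A. \<Sum>b\<in>?A. \<Sum>c\<in>?A. scal (\<Phi> j c * \<Psi> b i) (X a b \<top> Q c a)) = (\<Sum>b\<in>?A. \<Sum>a\<in>?A. \<Sum>c\<in>?A. scal (\<Phi> j c * \<Psi> b i) (X a b \<top> Q c a))"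
      by (rule sum.swap)
    also have "\<dots> = (\<Sum>b\<in>?A. \<Sum>c\<in>?A. \<Sum>a\<in>?A. scal (\<Phi> j c * \<Psi> b i) (X a b \<top> Q c a))"
      by (rule sum.cong[OF refl], rule sum.swap)
    finally show ?thesis .
  qed
  also have "\<dots> = (\<Sum>b\<in>?A. \<Sum>c\<in>?A. scal (\<Phi> j c * \<Psi> b i) (X c b - Q c b))"
  proof (intro sum.cong refl)
    fix b c assume "b \<in> ?A" "c \<in> ?A"
    then have "X c b = Q c b + (\<Sum>a\<le>n. X a b \<top> Q c a)" using R unfolding rel_def by auto
    then show "(\<Sum>a\<in>?A. scal (\<Phi> j c * \<Psi> b i) (X a b \<top> Q c a)) = scal (\<Phi> j c * \<Psi> b i) (X c b - Q c b)"
      by (simp add: scal_sum_right[symmetric])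
  qed
  also have "\<dots> = conj_mat n \<Phi> X \<Psi> j i - conj_mat n \<Phi> Q \<Psi> j i"
    unfolding conj_mat_def
    by (subst sum.swap) (simp add: scal_diff_right sum_subtractf)
  finally show "conj_mat n \<Phi> X \<Psi> j i = conj_mat n \<Phi> Q \<Psi> j i + (\<Sum>m\<le>n. conj_mat n \<Phi> X \<Psi> m i \<top> conj_mat n \<Phi> Q \<Psi> j m)"
    by simp
qed



lemma lookup_tensC: "Poly_Mapping.lookup (tensC h x) (F, k) = Poly_Mapping.lookup h F * Poly_Mapping.lookup x k"
proof -
  have "Poly_Mapping.lookup (tensC h x) (F, k) =
    (\<Sum>F'\<in>Poly_Mapping.keys h. \<Sum>j\<in>Poly_Mapping.keys x. if F' = F \<and> j = k then Poly_Mapping.lookup h F' * Poly_Mapping.lookup x j else 0)"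
    by (simp add: tensC_def lookup_sum lookup_single when_def)
  also have "\<dots> = (\<Sum>F'\<in>Poly_Mapping.keys h. if F' = F then (if k \<in> Poly_Mapping.keys x then Poly_Mapping.lookup h F' * Poly_Mapping.lookup x k else 0) else 0)"
  proof (rule sum.cong[OF refl])
    fix F' show "(\<Sum>j\<in>Poly_Mapping.keys x. if F' = F \<and> j = k then Poly_Mapping.lookup h F' * Poly_Mapping.lookup x j else 0) = 
      (if F' = F then (if k \<in> Poly_Mapping.keys x then Poly_Mapping.lookup h F' * Poly_Mapping.lookup x k else 0) else 0)"
    proof (cases "F' = F")
      case True then show ?thesis by (simp add: sum.delta')
    qed simp
  qed
  also have "\<dots> = Poly_Mapping.lookup h F * Poly_Mapping.lookup x k"
    by (simp add: sum.delta' in_keys_iff)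
  finally show ?thesis .
qed



lemma mult_if_delta: "(a::rat) * (if P then 1 else 0) = (if P then a else 0)"
  by simp

lemma coef_gt: "i < k \<Longrightarrow> coef p i k = 0"
  by (simp add: coef_def)
lemma coef_eq: "coef p i i = 1"
  by (simp add: coef_def)

lemma lookup_coact_basis: "Poly_Mapping.lookup (coact_basis p i) (F, k) = Poly_Mapping.lookup (coef p i k) F"
proof -
  have "Poly_Mapping.lookup (coact_basis p i) (F, k) = (\<Sum>j\<le>i. if j = k then Poly_Mapping.lookup (coef p i j) F else 0)"
    by (simp add: coact_basis_def lookup_sum lookup_tensC lookup_single when_def mult_if_delta)
  also have "\<dots> = Poly_Mapping.lookup (coef p i k) F"
    by (simp add: sum.delta' coef_gt)
  finally show ?thesis .
qed

lemma CspaceD: "x \<in> Cspace n \<Longrightarrow> n < k \<Longrightarrow> Poly_Mapping.lookup x k = 0"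
proof -
  assume "x \<in> Cspace n" "n < k"
  then have "k \<notin> Poly_Mapping.keys x" unfolding Cspace_def by auto
  then show ?thesis by (simp add: in_keys_iff)
qed

lemma CspaceI:
  assumes H: "\<And>k. n < k \<Longrightarrow> Poly_Mapping.lookup x k = 0" shows "x \<in> Cspace n"
  unfolding Cspace_def mem_Collect_eq
proof
  fix k assume k: "k \<in> Poly_Mapping.keys x"
  from k have "Poly_Mapping.lookup x k \<noteq> 0" by (simp add: in_keys_iff)
  with H show "k \<in> {..n}" by (meson atMost_iff not_le)
qed

lemma lookup_coact:
  assumes "x \<in> Cspace n"
  shows "Poly_Mapping.lookup (coact p x) (F, k) = (\<Sum>i\<le>n. Poly_Mapping.lookup x i * Poly_Mapping.lookup (coef p i k) F)"
proof -
  have "Poly_Mapping.lookup (coact p x) (F, k) = (\<Sum>i\<in>Poly_Mapping.keys x. Poly_Mapping.lookup x i * Poly_Mapping.lookup (coef p i k) F)"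
    by (simp add: coact_def lookup_sum lookup_coact_basis)
  also have "\<dots> = (\<Sum>i\<le>n. Poly_Mapping.lookup x i * Poly_Mapping.lookup (coef p i k) F)"
  proof (rule sum.mono_neutral_left)
    show "Poly_Mapping.keys x \<subseteq> {..n}" using assms by (simp add: Cspace_def)
    show "\<forall>i\<in>{..n} - Poly_Mapping.keys x. Poly_Mapping.lookup x i * Poly_Mapping.lookup (coef p i k) F = 0"
      by (simp add: in_keys_iff)
  qed simp
  finally show ?thesis .
qed

lemma lookup_id_tens:
  assumes y: "\<And>F j. n < j \<Longrightarrow> Poly_Mapping.lookup y (F, j) = 0"
  shows "Poly_Mapping.lookup (id_tens \<phi> y) (F, k) = (\<Sum>j\<le>n. Poly_Mapping.lookup y (F, j) * Poly_Mapping.lookup (\<phi> (Poly_Mapping.single j 1)) k)"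
proof -
  define G where "G = (\<lambda>(F', j). Poly_Mapping.lookup y (F', j) * (if F' = F then Poly_Mapping.lookup (\<phi> (Poly_Mapping.single j 1)) k else 0))"
  have "Poly_Mapping.lookup (id_tens \<phi> y) (F, k) = (\<Sum>z\<in>Poly_Mapping.keys y. G z)"
    unfolding id_tens_def lookup_sum
  proof (rule sum.cong[OF refl])
    fix z :: "forest \<times> nat"
    obtain F' j where zz: "z = (F', j)" by (cases z)
    show "Poly_Mapping.lookup (case z of (F, j) \<Rightarrow> scal (Poly_Mapping.lookup y (F, j)) (tensC (Poly_Mapping.single F 1) (\<phi> (Poly_Mapping.single j 1)))) (F, k) = G z"
      unfolding zz G_def by (simp add: lookup_tensC lookup_single when_def)
  qed
  also have "\<dots> = (\<Sum>z\<in>Poly_Mapping.keys y \<union> Pair F ` {..n}. G z)"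
  proof (rule sum.mono_neutral_left)
    show "\<forall>z\<in>Poly_Mapping.keys y \<union> Pair F ` {..n} - Poly_Mapping.keys y. G z = 0"
    proof
      fix z assume "z \<in> Poly_Mapping.keys y \<union> Pair F ` {..n} - Poly_Mapping.keys y"
      then have "Poly_Mapping.lookup y z = 0" by (simp add: in_keys_iff)
      then show "G z = 0" unfolding G_def by (cases z) simp
    qed
  qed auto
  also have "\<dots> = (\<Sum>z\<in>Pair F ` {..n}. G z)"
  proof (rule sum.mono_neutral_right)
    show "\<forall>z\<in>Poly_Mapping.keys y \<union> Pair F ` {..n} - Pair F ` {..n}. G z = 0"
    proof
      fix z assume z: "z \<in> Poly_Mapping.keys y \<union> Pair F ` {..n} - Pair F ` {..n}"
      obtain F' j where zz: "z = (F', j)" by (cases z)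
      show "G z = 0"
      proof (cases "F' = F")
        case True
        with z zz have "n < j" by auto
        with y zz show ?thesis by (simp add: G_def)
      qed (simp add: G_def zz)
    qed
  qed auto
  also have "\<dots> = (\<Sum>j\<le>n. G (F, j))"
    by (subst sum.reindex) (auto simp: inj_on_def)
  finally show ?thesis by (simp add: G_def)
qed

lemma lookup_coact_bound: "x \<in> Cspace n \<Longrightarrow> n < j \<Longrightarrow> Poly_Mapping.lookup (coact p x) (F, j) = 0"
  by (simp add: lookup_coact coef_gt)



lemma Cspace_single: "j \<le> n \<Longrightarrow> Poly_Mapping.single j 1 \<in> Cspace n"
  by (rule CspaceI) (simp add: lookup_single when_def)
lemma Cspace_add: "x \<in> Cspace n \<Longrightarrow> y \<in> Cspace n \<Longrightarrow> x + y \<in> Cspace n"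
  by (rule CspaceI) (simp add: lookup_add CspaceD)
lemma Cspace_scal: "x \<in> Cspace n \<Longrightarrow> scal c x \<in> Cspace n"
  by (rule CspaceI) (simp add: CspaceD)
lemma Cspace_zero: "0 \<in> Cspace n"
  by (rule CspaceI) simp
lemma Cspace_sum: "(\<And>a. a \<in> A \<Longrightarrow> f a \<in> Cspace n) \<Longrightarrow> sum f A \<in> Cspace n"
  by (induction A rule: infinite_finite_induct) (auto simp: Cspace_zero Cspace_add)

lemma lin_zero: "lin_on n \<phi> \<Longrightarrow> \<phi> 0 = 0"
  unfolding lin_on_def by (metis Cspace_zero scal_zero_left)

lemma lin_sum:
  assumes "lin_on n \<phi>" "finite A" "\<And>a. a \<in> A \<Longrightarrow> f a \<in> Cspace n"
  shows "\<phi> (sum f A) = (\<Sum>a\<in>A. \<phi> (f a))"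
  using assms(2,3)
proof (induction A rule: finite_induct)
  case empty then show ?case using lin_zero[OF assms(1)] by simp
next
  case (insert a A)
  have "\<phi> (f a + sum f A) = \<phi> (f a) + \<phi> (sum f A)"
    using assms(1) insert.prems unfolding lin_on_def by (meson Cspace_sum insertCI)
  with insert show ?case by simp
qed

lemma Cspace_expand: "x \<in> Cspace n \<Longrightarrow> x = (\<Sum>j\<le>n. scal (Poly_Mapping.lookup x j) (Poly_Mapping.single j 1))"
proof (rule poly_mapping_eqI)
  fix k assume x: "x \<in> Cspace n"
  show "Poly_Mapping.lookup x k = Poly_Mapping.lookup (\<Sum>j\<le>n. scal (Poly_Mapping.lookup x j) (Poly_Mapping.single j 1)) k"
    using x by (cases "k \<le> n") (auto simp: lookup_sum lookup_single when_def mult_if_delta sum.delta' CspaceD)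
qed

lemma lin_expand:
  assumes "lin_on n \<phi>" "x \<in> Cspace n"
  shows "\<phi> x = (\<Sum>j\<le>n. scal (Poly_Mapping.lookup x j) (\<phi> (Poly_Mapping.single j 1)))"
proof -
  have "\<phi> x = \<phi> (\<Sum>j\<le>n. scal (Poly_Mapping.lookup x j) (Poly_Mapping.single j 1))"
    using Cspace_expand[OF assms(2)] by simp
  also have "\<dots> = (\<Sum>j\<le>n. \<phi> (scal (Poly_Mapping.lookup x j) (Poly_Mapping.single j 1)))"
    by (rule lin_sum[OF assms(1)]) (auto intro: Cspace_scal Cspace_single)
  also have "\<dots> = (\<Sum>j\<le>n. scal (Poly_Mapping.lookup x j) (\<phi> (Poly_Mapping.single j 1)))"
    using assms(1) unfolding lin_on_def by (auto intro!: sum.cong Cspace_single)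
  finally show ?thesis .
qed

lemma lin_lookup:
  assumes "lin_on n \<phi>" "x \<in> Cspace n"
  shows "Poly_Mapping.lookup (\<phi> x) k = (\<Sum>j\<le>n. Poly_Mapping.lookup x j * Poly_Mapping.lookup (\<phi> (Poly_Mapping.single j 1)) k)"
  by (subst lin_expand[OF assms]) (simp add: lookup_sum)

lemma inv_lin:
  assumes lin: "lin_on n \<phi>" and bij: "bij_betw \<phi> (Cspace n) (Cspace n)"
  shows "lin_on n (inv_into (Cspace n) \<phi>)"
proof -
  let ?\<psi> = "inv_into (Cspace n) \<phi>"
  have inC: "\<And>x. x \<in> Cspace n \<Longrightarrow> ?\<psi> x \<in> Cspace n"
    using bij by (metis bij_betw_def inv_into_into)
  have fi: "\<And>x. x \<in> Cspace n \<Longrightarrow> \<phi> (?\<psi> x) = x"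
    using bij by (meson bij_betw_inv_into_right)
  have inj: "inj_on \<phi> (Cspace n)" using bij by (simp add: bij_betw_def)
  show ?thesis unfolding lin_on_def
  proof (intro conjI ballI allI)
    fix x y assume x: "x \<in> Cspace n" and y: "y \<in> Cspace n"
    have "\<phi> (?\<psi> x + ?\<psi> y) = x + y"
      using lin x y inC fi unfolding lin_on_def by simp
    moreover have "\<phi> (?\<psi> (x + y)) = x + y" using fi Cspace_add x y by blast
    ultimately show "?\<psi> (x + y) = ?\<psi> x + ?\<psi> y"
      using inj inC Cspace_add x y by (metis inj_onD)
  next
    fix c x assume x: "x \<in> Cspace n"
    have "\<phi> (scal c (?\<psi> x)) = scal c x"
      using lin x inC fi unfolding lin_on_def by simp
    moreover have "\<phi> (?\<psi> (scal c x)) = scal c x" using fi Cspace_scal x by blast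
    ultimately show "?\<psi> (scal c x) = scal c (?\<psi> x)"
      using inj inC Cspace_scal x by (metis inj_onD)
  qed
qed



definition phimat :: "((nat \<Rightarrow>\<^sub>0 rat) \<Rightarrow> (nat \<Rightarrow>\<^sub>0 rat)) \<Rightarrow> nat \<Rightarrow> nat \<Rightarrow> rat" where
  "phimat \<phi> k j = Poly_Mapping.lookup (\<phi> (Poly_Mapping.single j 1)) k"

lemma delta_mult: "(if P then 1 else (0::rat)) * a = (if P then a else 0)"
  by simp

lemma COMOD_IFF:
  assumes lin: "lin_on n \<phi>" and maps: "\<And>x. x \<in> Cspace n \<Longrightarrow> \<phi> x \<in> Cspace n"
  shows "(\<forall>x\<in>Cspace n. coact p' (\<phi> x) = id_tens \<phi> (coact p x)) \<longleftrightarrow>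
    (\<forall>l\<le>n. \<forall>k\<le>n. (\<Sum>i\<le>n. scal (phimat \<phi> i l) (coef p' i k)) = (\<Sum>j\<le>n. scal (phimat \<phi> k j) (coef p l j)))"
proof
  assume H: "\<forall>x\<in>Cspace n. coact p' (\<phi> x) = id_tens \<phi> (coact p x)"
  show "\<forall>l\<le>n. \<forall>k\<le>n. (\<Sum>i\<le>n. scal (phimat \<phi> i l) (coef p' i k)) = (\<Sum>j\<le>n. scal (phimat \<phi> k j) (coef p l j))"
  proof (intro allI impI poly_mapping_eqI)
    fix l k F assume l: "l \<le> n" and k: "k \<le> n"
    let ?e = "Poly_Mapping.single l (1::rat)"
    have e: "?e \<in> Cspace n" using l by (rule Cspace_single)
    have "Poly_Mapping.lookup (coact p' (\<phi> ?e)) (F, k) = Poly_Mapping.lookup (id_tens \<phi> (coact p ?e)) (F, k)"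
      using H e by simp
    moreover have "Poly_Mapping.lookup (coact p' (\<phi> ?e)) (F, k) = (\<Sum>i\<le>n. phimat \<phi> i l * Poly_Mapping.lookup (coef p' i k) F)"
      by (simp add: lookup_coact[OF maps[OF e]] phimat_def)
    moreover have "Poly_Mapping.lookup (id_tens \<phi> (coact p ?e)) (F, k) = (\<Sum>j\<le>n. Poly_Mapping.lookup (coact p ?e) (F, j) * phimat \<phi> k j)"
      by (simp add: lookup_id_tens lookup_coact_bound[OF e] phimat_def)
    moreover have "\<And>j. Poly_Mapping.lookup (coact p ?e) (F, j) = Poly_Mapping.lookup (coef p l j) F"
      using l by (simp add: lookup_coact[OF e] lookup_single when_def sum.delta delta_mult)
    ultimately show "Poly_Mapping.lookup (\<Sum>i\<le>n. scal (phimat \<phi> i l) (coef p' i k)) F = Poly_Mapping.lookup (\<Sum>j\<le>n. scal (phimat \<phi> k j) (coef p l j)) F"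
      by (simp add: lookup_sum mult.commute)
  qed
next
  assume H: "\<forall>l\<le>n. \<forall>k\<le>n. (\<Sum>i\<le>n. scal (phimat \<phi> i l) (coef p' i k)) = (\<Sum>j\<le>n. scal (phimat \<phi> k j) (coef p l j))"
  have H': "\<And>l k F. l \<le> n \<Longrightarrow> k \<le> n \<Longrightarrow> (\<Sum>i\<le>n. phimat \<phi> i l * Poly_Mapping.lookup (coef p' i k) F) = (\<Sum>j\<le>n. phimat \<phi> k j * Poly_Mapping.lookup (coef p l j) F)"
  proof -
    fix l k F assume "l \<le> n" "k \<le> n"
    with H have "Poly_Mapping.lookup (\<Sum>i\<le>n. scal (phimat \<phi> i l) (coef p' i k)) F = Poly_Mapping.lookup (\<Sum>j\<le>n. scal (phimat \<phi> k j) (coef p l j)) F"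
      by simp
    then show "(\<Sum>i\<le>n. phimat \<phi> i l * Poly_Mapping.lookup (coef p' i k) F) = (\<Sum>j\<le>n. phimat \<phi> k j * Poly_Mapping.lookup (coef p l j) F)"
      by (simp add: lookup_sum)
  qed
  show "\<forall>x\<in>Cspace n. coact p' (\<phi> x) = id_tens \<phi> (coact p x)"
  proof (intro ballI poly_mapping_eqI)
    fix x and z :: "forest \<times> nat" assume x: "x \<in> Cspace n"
    obtain F k where zz: "z = (F, k)" by (cases z)
    have L: "Poly_Mapping.lookup (coact p' (\<phi> x)) (F, k) = (\<Sum>i\<le>n. (\<Sum>l\<le>n. Poly_Mapping.lookup x l * phimat \<phi> i l) * Poly_Mapping.lookup (coef p' i k) F)"
      by (simp add: lookup_coact[OF maps[OF x]] lin_lookup[OF lin x] phimat_def)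
    have R: "Poly_Mapping.lookup (id_tens \<phi> (coact p x)) (F, k) = (\<Sum>j\<le>n. (\<Sum>l\<le>n. Poly_Mapping.lookup x l * Poly_Mapping.lookup (coef p l j) F) * phimat \<phi> k j)"
      by (simp add: lookup_id_tens[OF lookup_coact_bound[OF x]] lookup_coact[OF x] phimat_def)
    show "Poly_Mapping.lookup (coact p' (\<phi> x)) z = Poly_Mapping.lookup (id_tens \<phi> (coact p x)) z"
    proof (cases "k \<le> n")
      case True
      have "(\<Sum>i\<le>n. (\<Sum>l\<le>n. Poly_Mapping.lookup x l * phimat \<phi> i l) * Poly_Mapping.lookup (coef p' i k) F)
          = (\<Sum>i\<le>n. \<Sum>l\<le>n. Poly_Mapping.lookup x l * (phimat \<phi> i l * Poly_Mapping.lookup (coef p' i k) F))"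
        by (simp add: sum_distrib_right mult.assoc)
      also have "\<dots> = (\<Sum>l\<le>n. \<Sum>i\<le>n. Poly_Mapping.lookup x l * (phimat \<phi> i l * Poly_Mapping.lookup (coef p' i k) F))"
        by (rule sum.swap)
      also have "\<dots> = (\<Sum>l\<le>n. Poly_Mapping.lookup x l * (\<Sum>i\<le>n. phimat \<phi> i l * Poly_Mapping.lookup (coef p' i k) F))"
        by (simp add: sum_distrib_left)
      also have "\<dots> = (\<Sum>l\<le>n. Poly_Mapping.lookup x l * (\<Sum>j\<le>n. phimat \<phi> k j * Poly_Mapping.lookup (coef p l j) F))"
        using H' True by simp
      also have "\<dots> = (\<Sum>l\<le>n. \<Sum>j\<le>n. Poly_Mapping.lookup x l * Poly_Mapping.lookup (coef p l j) F * phimat \<phi> k j)"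
        by (simp add: sum_distrib_left mult_ac)
      also have "\<dots> = (\<Sum>j\<le>n. \<Sum>l\<le>n. Poly_Mapping.lookup x l * Poly_Mapping.lookup (coef p l j) F * phimat \<phi> k j)"
        by (rule sum.swap)
      also have "\<dots> = (\<Sum>j\<le>n. (\<Sum>l\<le>n. Poly_Mapping.lookup x l * Poly_Mapping.lookup (coef p l j) F) * phimat \<phi> k j)"
        by (simp add: sum_distrib_right)
      finally show ?thesis using L R zz by simp
    next
      case False
      have "\<And>j. j \<le> n \<Longrightarrow> phimat \<phi> k j = 0"
        unfolding phimat_def using False by (intro CspaceD[OF maps[OF Cspace_single]]) auto
      moreover have "\<And>i. i \<le> n \<Longrightarrow> coef p' i k = 0" using False by (intro coef_gt) auto
      ultimately show ?thesis using L R zz by simp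
    qed
  qed
qed

lemma coef_Mm: "coef p i k = Mm p k i + (if i = k then 1 else 0)"
  by (auto simp: Mm_def coef_def)

lemma MPHI_conv:
  assumes "l \<le> n" "k \<le> n"
  shows "((\<Sum>i\<le>n. scal (\<Phi> i l) (coef p' i k)) = (\<Sum>j\<le>n. scal (\<Phi> k j) (coef p l j))) \<longleftrightarrow>
         ((\<Sum>i\<le>n. scal (\<Phi> i l) (Mm p' k i)) = (\<Sum>j\<le>n. scal (\<Phi> k j) (Mm p j l)))"
proof -
  have 1: "(\<Sum>i\<le>n. scal (\<Phi> i l) (coef p' i k)) = (\<Sum>i\<le>n. scal (\<Phi> i l) (Mm p' k i)) + scal (\<Phi> k l) 1"
    using assms by (simp add: coef_Mm scal_add_right sum.distrib if_distrib[of "scal _"] sum.delta' cong: if_cong)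
  have 2: "(\<Sum>j\<le>n. scal (\<Phi> k j) (coef p l j)) = (\<Sum>j\<le>n. scal (\<Phi> k j) (Mm p j l)) + scal (\<Phi> k l) 1"
    using assms by (simp add: coef_Mm scal_add_right sum.distrib if_distrib[of "scal _"] sum.delta cong: if_cong)
  show ?thesis unfolding 1 2 by simp
qed

lemma FWD_CONJ:
  assumes inv: "mat_inverse_on {..n} \<Phi> \<Psi>"
    and H: "\<And>l k. l \<le> n \<Longrightarrow> k \<le> n \<Longrightarrow> (\<Sum>i\<le>n. scal (\<Phi> i l) (X' k i)) = (\<Sum>j\<le>n. scal (\<Phi> k j) (X j l))"
    and k: "k \<le> n" and l: "l \<le> n"
  shows "X' k l = conj_mat n \<Phi> X \<Psi> k l"
proof -
  have inv1: "\<And>i l. i \<le> n \<Longrightarrow> l \<le> n \<Longrightarrow> (\<Sum>b\<le>n. \<Phi> i b * \<Psi> b l) = (if i = l then 1 else 0)"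
    using inv unfolding mat_inverse_on_def by auto
  have "conj_mat n \<Phi> X \<Psi> k l = (\<Sum>b\<le>n. scal (\<Psi> b l) (\<Sum>a\<le>n. scal (\<Phi> k a) (X a b)))"
    unfolding conj_mat_def by (subst sum.swap) (simp add: scal_sum_right mult.commute)
  also have "\<dots> = (\<Sum>b\<le>n. scal (\<Psi> b l) (\<Sum>i\<le>n. scal (\<Phi> i b) (X' k i)))"
    using H k by simp
  also have "\<dots> = (\<Sum>b\<le>n. \<Sum>i\<le>n. scal (\<Phi> i b * \<Psi> b l) (X' k i))"
    by (simp add: scal_sum_right mult.commute)
  also have "\<dots> = (\<Sum>i\<le>n. \<Sum>b\<le>n. scal (\<Phi> i b * \<Psi> b l) (X' k i))"
    by (rule sum.swap)
  also have "\<dots> = (\<Sum>i\<le>n. scal (\<Sum>b\<le>n. \<Phi> i b * \<Psi> b l) (X' k i))"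
    by (simp add: scal_sum_left)
  also have "\<dots> = (\<Sum>i\<le>n. if i = l then X' k i else 0)"
    by (rule sum.cong[OF refl]) (simp add: inv1 l)
  also have "\<dots> = X' k l" using l by simp
  finally show ?thesis by simp
qed

lemma BWD_CONJ:
  assumes inv: "mat_inverse_on {..n} \<Phi> \<Psi>"
    and H: "\<And>k l. k \<le> n \<Longrightarrow> l \<le> n \<Longrightarrow> X' k l = conj_mat n \<Phi> X \<Psi> k l"
    and k: "k \<le> n" and l: "l \<le> n"
  shows "(\<Sum>i\<le>n. scal (\<Phi> i l) (X' k i)) = (\<Sum>j\<le>n. scal (\<Phi> k j) (X j l))"
proof -
  have inv2: "\<And>b l. b \<le> n \<Longrightarrow> l \<le> n \<Longrightarrow> (\<Sum>i\<le>n. \<Psi> b i * \<Phi> i l) = (if b = l then 1 else 0)"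
    using inv unfolding mat_inverse_on_def by auto
  have "(\<Sum>i\<le>n. scal (\<Phi> i l) (X' k i)) = (\<Sum>i\<le>n. \<Sum>a\<le>n. \<Sum>b\<le>n. scal (\<Phi> k a * \<Psi> b i * \<Phi> i l) (X a b))"
    using H k by (simp add: conj_mat_def scal_sum_right mult_ac)
  also have "\<dots> = (\<Sum>a\<le>n. \<Sum>b\<le>n. \<Sum>i\<le>n. scal (\<Phi> k a * \<Psi> b i * \<Phi> i l) (X a b))"
  proof -
    have "(\<Sum>i\<le>n. \<Sum>a\<le>n. \<Sum>b\<le>n. scal (\<Phi> k a * \<Psi> b i * \<Phi> i l) (X a b)) = (\<Sum>a\<le>n. \<Sum>i\<le>n. \<Sum>b\<le>n. scal (\<Phi> k a * \<Psi> b i * \<Phi> i l) (X a b))"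
      by (rule sum.swap)
    also have "\<dots> = (\<Sum>a\<le>n. \<Sum>b\<le>n. \<Sum>i\<le>n. scal (\<Phi> k a * \<Psi> b i * \<Phi> i l) (X a b))"
      by (rule sum.cong[OF refl], rule sum.swap)
    finally show ?thesis .
  qed
  also have "\<dots> = (\<Sum>a\<le>n. \<Sum>b\<le>n. if b = l then scal (\<Phi> k a) (X a b) else 0)"
  proof (intro sum.cong refl)
    fix a b assume "b \<in> {..n}"
    then show "(\<Sum>i\<le>n. scal (\<Phi> k a * \<Psi> b i * \<Phi> i l) (X a b)) = (if b = l then scal (\<Phi> k a) (X a b) else 0)"
      using inv2[of b l] l by (simp add: scal_sum_left[symmetric] sum_distrib_left[symmetric] mult.assoc)
  qed
  also have "\<dots> = (\<Sum>j\<le>n. scal (\<Phi> k j) (X j l))" using l by simp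
  finally show ?thesis .
qed



lemma bstart_0 [simp]: "bstart cs 0 = 0"
  by (simp add: bstart_def)

lemma bstart_mono: "i \<le> j \<Longrightarrow> bstart cs i \<le> bstart cs j"
proof -
  assume "i \<le> j"
  then obtain d where "j = i + d" using le_Suc_ex by blast
  then show ?thesis by (simp add: bstart_def take_add)
qed

lemma bstart_le_sum: "bstart cs i \<le> sum_list cs"
  by (metis append_take_drop_id bstart_def le_add1 sum_list_append)

lemma bstart_full: "length cs \<le> i \<Longrightarrow> bstart cs i = sum_list cs"
  by (simp add: bstart_def)

lemma bstart_Suc: "i < length cs \<Longrightarrow> bstart cs (Suc i) = bstart cs i + cs ! i"
  by (simp add: bstart_def take_Suc_conv_app_nth)

lemma bstart_strict:
  assumes "is_type n cs" "i < length cs" shows "bstart cs i < bstart cs (Suc i)"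
proof -
  have "cs ! i > 0" using assms nth_mem unfolding is_type_def by blast
  then show ?thesis using bstart_Suc[OF assms(2)] by simp
qed

lemma bstart_less_imp:
  assumes "bstart cs i < bstart cs j" shows "i < j"
proof (rule ccontr)
  assume "\<not> i < j"
  then have "bstart cs j \<le> bstart cs i" by (intro bstart_mono) simp
  with assms show False by simp
qed

lemma bstart_lt_len:
  assumes "is_type n cs" "i < length cs" shows "bstart cs i \<le> n"
proof -
  have "bstart cs i < bstart cs (Suc i)" by (rule bstart_strict[OF assms])
  also have "\<dots> \<le> Suc n" using bstart_le_sum assms(1) unfolding is_type_def by metis
  finally show ?thesis by simp
qed

lemma find_block_aux:
  fixes f :: "nat \<Rightarrow> nat"
  assumes "f 0 = 0" "c < f m"
  shows "\<exists>b<m. f b \<le> c \<and> c < f (Suc b)"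
  using assms(2)
proof (induction m)
  case 0 then show ?case using assms(1) by simp
next
  case (Suc m)
  show ?case
  proof (cases "c < f m")
    case True
    from Suc.IH[OF True] obtain b where "b < m" "f b \<le> c" "c < f (Suc b)" by blast
    then show ?thesis by (intro exI[of _ b]) auto
  next
    case False then show ?thesis using Suc.prems by (intro exI[of _ m]) auto
  qed
qed

lemma find_block:
  assumes "is_type n cs" "c \<le> n"
  shows "\<exists>b<length cs. bstart cs b \<le> c \<and> c < bstart cs (Suc b)"
proof -
  have "c < bstart cs (length cs)" using assms bstart_full[of cs "length cs"] unfolding is_type_def by simp
  then show ?thesis using find_block_aux[of "bstart cs"] by simp
qed

lemma Zlow:
  assumes red: "reduced_of_type n p cs" and r: "r \<le> n" and c: "c \<le> n"
    and rm: "bstart cs m \<le> r" and cm: "c < bstart cs (Suc m)"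
  shows "assoc_mat p r c = 0"
proof -
  have ty: "is_type n cs" using red by (simp add: reduced_of_type_def)
  obtain a where a: "a < length cs" "bstart cs a \<le> r" "r < bstart cs (Suc a)" using find_block[OF ty r] by blast
  obtain b where b: "b < length cs" "bstart cs b \<le> c" "c < bstart cs (Suc b)" using find_block[OF ty c] by blast
  have "bstart cs m < bstart cs (Suc a)" using rm a(3) by simp
  then have "m < Suc a" by (rule bstart_less_imp)
  moreover have "bstart cs b < bstart cs (Suc m)" using b(2) cm by simp
  then have "b < Suc m" by (rule bstart_less_imp)
  ultimately have "b \<le> a" by simp
  moreover have "\<forall>a<length cs. \<forall>b<length cs. b \<le> a \<longrightarrow> (\<forall>r\<in>blk cs a. \<forall>c\<in>blk cs b. assoc_mat p r c = 0)"
    using red unfolding reduced_of_type_def by blast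
  moreover have "r \<in> blk cs a" "c \<in> blk cs b" using a b by (simp_all add: blk_def)
  ultimately show ?thesis using a(1) b(1) by blast
qed

lemma KER:
  assumes red: "reduced_of_type n p cs"
    and H: "\<And>r. r \<le> n \<Longrightarrow> bstart cs m \<le> r \<Longrightarrow> (\<Sum>c\<le>n. scal (x c) (assoc_mat p r c)) = 0"
    and c: "c \<le> n" and cm: "bstart cs (Suc m) \<le> c"
  shows "x c = 0"
proof -
  have ty: "is_type n cs" using red by (simp add: reduced_of_type_def)
  have sumcs: "sum_list cs = Suc n" using ty by (simp add: is_type_def)
  have main: "\<forall>c\<le>n. bstart cs i \<le> c \<longrightarrow> x c = 0" if "Suc m \<le> i" "i \<le> length cs" for i
    using that
  proof (induction "length cs - i" arbitrary: i rule: less_induct)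
    case less
    show ?case
    proof (cases "i = length cs")
      case True
      then show ?thesis using bstart_full[of cs i] sumcs by auto
    next
      case False
      then have il: "i < length cs" using less.prems by simp
      have IH: "\<forall>c\<le>n. bstart cs (Suc i) \<le> c \<longrightarrow> x c = 0"
        using less.hyps[of "Suc i"] il less.prems by simp
      obtain i' where i': "i = Suc i'" using less.prems by (cases i) auto
      have blk_sub: "blk cs i \<subseteq> {..n}"
        using bstart_le_sum[of cs "Suc i"] sumcs by (auto simp: blk_def)
      have "\<forall>r\<in>blk cs (i - 1). (\<Sum>c\<in>blk cs i. scal (x c) (assoc_mat p r c)) = 0"
      proof
        fix r assume r: "r \<in> blk cs (i - 1)"
        have rn: "r \<le> n" using r bstart_lt_len[OF ty il] i' by (auto simp: blk_def)
        have rm: "bstart cs m \<le> r" using r i' less.prems bstart_mono[of m i' cs] by (auto simp: blk_def)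
        have "(\<Sum>c\<in>blk cs i. scal (x c) (assoc_mat p r c)) = (\<Sum>c\<le>n. scal (x c) (assoc_mat p r c))"
        proof (rule sum.mono_neutral_left)
          show "\<forall>c\<in>{..n} - blk cs i. scal (x c) (assoc_mat p r c) = 0"
          proof
            fix c assume c: "c \<in> {..n} - blk cs i"
            show "scal (x c) (assoc_mat p r c) = 0"
            proof (cases "c < bstart cs i")
              case True
              have "bstart cs i' \<le> r" using r i' by (simp add: blk_def)
              then have "assoc_mat p r c = 0" using Zlow[OF red rn _ _ True[unfolded i']] c by simp
              then show ?thesis by simp
            next
              case False
              then have "bstart cs (Suc i) \<le> c" using c by (auto simp: blk_def)
              then show ?thesis using IH c by simp
            qed
          qed
        qed (use blk_sub in auto)
        also have "\<dots> = 0" using H rn rm by simp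
        finally show "(\<Sum>c\<in>blk cs i. scal (x c) (assoc_mat p r c)) = 0" .
      qed
      moreover have "1 \<le> i" using i' by simp
      ultimately have Z: "\<forall>c\<in>blk cs i. x c = 0" using red il unfolding reduced_of_type_def by blast
      show ?thesis
      proof (intro allI impI)
        fix c assume "c \<le> n" "bstart cs i \<le> c"
        then show "x c = 0" using IH Z by (cases "c < bstart cs (Suc i)") (auto simp: blk_def)
      qed
    qed
  qed
  show ?thesis
  proof (cases "Suc m \<le> length cs")
    case True then show ?thesis using main[OF le_refl True] c cm by simp
  next
    case False
    then have "bstart cs (Suc m) = Suc n" using bstart_full[of cs "Suc m"] sumcs by simp
    then show ?thesis using c cm by simp
  qed
qed

lemma TRANS:
  assumes red: "reduced_of_type n p cs" and red': "reduced_of_type n p' cs'"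
    and comm: "\<And>r l. r \<le> n \<Longrightarrow> l \<le> n \<Longrightarrow> (\<Sum>k\<le>n. scal (g k l) (assoc_mat p' r k)) = (\<Sum>k\<le>n. scal (g r k) (assoc_mat p k l))"
  shows "j \<le> n \<Longrightarrow> j < bstart cs m \<Longrightarrow> k \<le> n \<Longrightarrow> bstart cs' m \<le> k \<Longrightarrow> g k j = 0"
proof (induction m arbitrary: j k)
  case 0 then show ?case by simp
next
  case (Suc m)
  show ?case
  proof (rule KER[OF red', of m "\<lambda>k. g k j"])
    fix r assume r: "r \<le> n" "bstart cs' m \<le> r"
    have "(\<Sum>k\<le>n. scal (g k j) (assoc_mat p' r k)) = (\<Sum>k\<le>n. scal (g r k) (assoc_mat p k j))"
      using comm r Suc.prems by simp
    also have "\<dots> = 0"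
    proof (rule sum.neutral, intro ballI)
      fix k assume k: "k \<in> {..n}"
      show "scal (g r k) (assoc_mat p k j) = 0"
      proof (cases "bstart cs m \<le> k")
        case True
        then have "assoc_mat p k j = 0" using Zlow[OF red _ _ True] k Suc.prems by simp
        then show ?thesis by simp
      next
        case False
        then have "g r k = 0" using Suc.IH[of k r] k r by simp
        then show ?thesis by simp
      qed
    qed
    finally show "(\<Sum>k\<le>n. scal (g k j) (assoc_mat p' r k)) = 0" .
  qed (use Suc.prems in auto)
qed

lemma TRACE:
  assumes inv: "mat_inverse_on {..n} g h"
    and a: "a \<le> Suc n" and b: "b \<le> Suc n"
    and T1: "\<And>j k. j < a \<Longrightarrow> k \<le> n \<Longrightarrow> b \<le> k \<Longrightarrow> g k j = 0"
    and T2: "\<And>j k. j < b \<Longrightarrow> k \<le> n \<Longrightarrow> a \<le> k \<Longrightarrow> h k j = 0"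
  shows "a = b"
proof -
  have subA: "{..<a} \<subseteq> {..n}" and subB: "{..<b} \<subseteq> {..n}" using a b by auto
  have "(of_nat b :: rat) = (\<Sum>j<b. \<Sum>k\<le>n. g j k * h k j)"
    using inv subB unfolding mat_inverse_on_def by (simp add: subset_eq)
  also have "\<dots> = (\<Sum>j<b. \<Sum>k<a. g j k * h k j)"
  proof (rule sum.cong[OF refl], rule sum.mono_neutral_right)
    fix j assume "j \<in> {..<b}"
    then show "\<forall>k\<in>{..n} - {..<a}. g j k * h k j = 0" using T2 by auto
  qed (use subA in auto)
  also have "\<dots> = (\<Sum>k<a. \<Sum>j<b. h k j * g j k)"
    by (subst sum.swap) (simp add: mult.commute)
  also have "\<dots> = (\<Sum>k<a. \<Sum>j\<le>n. h k j * g j k)"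
  proof (rule sum.cong[OF refl], rule sum.mono_neutral_left)
    fix k assume "k \<in> {..<a}"
    then show "\<forall>j\<in>{..n} - {..<b}. h k j * g j k = 0" using T1 by auto
  qed (use subB in auto)
  also have "\<dots> = of_nat a"
    using inv subA unfolding mat_inverse_on_def by (simp add: subset_eq)
  finally show ?thesis by simp
qed

lemma list_eq_by_bstart:
  assumes "\<forall>c\<in>set xs. 0 < c" "\<forall>c\<in>set ys. (0::nat) < c" "\<forall>m. bstart xs m = bstart ys m"
  shows "xs = ys"
  using assms
proof (induction xs arbitrary: ys)
  case Nil
  then show ?case
  proof (cases ys)
    case (Cons y ys')
    with Nil have "bstart [] 1 = bstart ys 1" by blast
    with Cons Nil.prems show ?thesis by (simp add: bstart_def)
  qed simp
next
  case (Cons x xs)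
  show ?case
  proof (cases ys)
    case Nil
    with Cons have "bstart (x # xs) 1 = bstart ys 1" by blast
    with Nil Cons.prems show ?thesis by (simp add: bstart_def)
  next
    case (Cons y ys')
    have 1: "x = y" using Cons.prems(3) spec[OF Cons.prems(3), of 1] Cons by (simp add: bstart_def)
    have "\<forall>m. bstart xs m = bstart ys' m"
    proof
      fix m
      have "bstart (x # xs) (Suc m) = bstart ys (Suc m)" using Cons.prems(3) by blast
      then show "bstart xs m = bstart ys' m" using Cons 1 by (simp add: bstart_def)
    qed
    then have "xs = ys'" using Cons.IH Cons.prems Cons by simp
    then show ?thesis using 1 Cons by simp
  qed
qed



lemma rel_cong:
  assumes "rel n X Q" "\<And>j i. j \<le> n \<Longrightarrow> i \<le> n \<Longrightarrow> X j i = X' j i" "\<And>j i. j \<le> n \<Longrightarrow> i \<le> n \<Longrightarrow> Q j i = Q' j i"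
  shows "rel n X' Q'"
  unfolding rel_def
proof (intro allI impI)
  fix j i assume j: "j \<le> n" and i: "i \<le> n"
  have "(\<Sum>m\<le>n. X' m i \<top> Q' j m) = (\<Sum>m\<le>n. X m i \<top> Q j m)"
    by (rule sum.cong[OF refl]) (use assms(2,3) j i in auto)
  then show "X' j i = Q' j i + (\<Sum>m\<le>n. X' m i \<top> Q' j m)"
    using assms j i unfolding rel_def by metis
qed

lemma inv_sym: "mat_inverse_on I g h \<Longrightarrow> mat_inverse_on I h g"
  unfolding mat_inverse_on_def by blast

lemma BWD2:
  assumes inv: "mat_inverse_on {..n} g h"
    and H: "\<And>k l. k \<le> n \<Longrightarrow> l \<le> n \<Longrightarrow> X' k l = conj_mat n g X h k l"
    and k: "k \<le> n" and l: "l \<le> n"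
  shows "(\<Sum>j\<le>n. scal (h k j) (X' j l)) = (\<Sum>i\<le>n. scal (h i l) (X k i))"
proof -
  have inv2: "\<And>k a. k \<le> n \<Longrightarrow> a \<le> n \<Longrightarrow> (\<Sum>j\<le>n. h k j * g j a) = (if k = a then 1 else 0)"
    using inv unfolding mat_inverse_on_def by auto
  have "(\<Sum>j\<le>n. scal (h k j) (X' j l)) = (\<Sum>j\<le>n. \<Sum>a\<le>n. \<Sum>b\<le>n. scal (h k j * g j a * h b l) (X a b))"
    using H l by (simp add: conj_mat_def scal_sum_right mult_ac)
  also have "\<dots> = (\<Sum>a\<le>n. \<Sum>b\<le>n. \<Sum>j\<le>n. scal (h k j * g j a * h b l) (X a b))"
  proof -
    have "(\<Sum>j\<le>n. \<Sum>a\<le>n. \<Sum>b\<le>n. scal (h k j * g j a * h b l) (X a b)) = (\<Sum>a\<le>n. \<Sum>j\<le>n. \<Sum>b\<le>n. scal (h k j * g j a * h b l) (X a b))"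
      by (rule sum.swap)
    also have "\<dots> = (\<Sum>a\<le>n. \<Sum>b\<le>n. \<Sum>j\<le>n. scal (h k j * g j a * h b l) (X a b))"
      by (rule sum.cong[OF refl], rule sum.swap)
    finally show ?thesis .
  qed
  also have "\<dots> = (\<Sum>a\<le>n. if a = k then (\<Sum>b\<le>n. scal (h b l) (X a b)) else 0)"
  proof (rule sum.cong[OF refl])
    fix a assume a: "a \<in> {..n}"
    have "(\<Sum>b\<le>n. \<Sum>j\<le>n. scal (h k j * g j a * h b l) (X a b)) = (\<Sum>b\<le>n. scal ((\<Sum>j\<le>n. h k j * g j a) * h b l) (X a b))"
      by (simp add: scal_sum_left sum_distrib_right)
    also have "\<dots> = (if a = k then (\<Sum>b\<le>n. scal (h b l) (X a b)) else 0)"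
      using inv2[of k a] a k by auto
    finally show "(\<Sum>b\<le>n. \<Sum>j\<le>n. scal (h k j * g j a * h b l) (X a b)) = (if a = k then (\<Sum>b\<le>n. scal (h b l) (X a b)) else 0)" .
  qed
  also have "\<dots> = (\<Sum>i\<le>n. scal (h i l) (X k i))" using k by (simp add: sum.delta)
  finally show ?thesis .
qed

lemma SYM:
  assumes inv: "mat_inverse_on {..n} g h"
    and H: "\<And>k l. k \<le> n \<Longrightarrow> l \<le> n \<Longrightarrow> X' k l = conj_mat n g X h k l"
    and k: "k \<le> n" and l: "l \<le> n"
  shows "X k l = conj_mat n h X' g k l"
  by (rule FWD_CONJ[OF inv_sym[OF inv] _ k l]) (use BWD2[OF inv H] in simp)

definition vecm :: "nat \<Rightarrow> (nat \<Rightarrow> nat \<Rightarrow> rat) \<Rightarrow> nat \<Rightarrow> (nat \<Rightarrow>\<^sub>0 rat)" where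
  "vecm n g j = (\<Sum>k\<le>n. Poly_Mapping.single k (g k j))"

definition linm :: "nat \<Rightarrow> (nat \<Rightarrow> nat \<Rightarrow> rat) \<Rightarrow> (nat \<Rightarrow>\<^sub>0 rat) \<Rightarrow> (nat \<Rightarrow>\<^sub>0 rat)" where
  "linm n g x = (\<Sum>j\<le>n. scal (Poly_Mapping.lookup x j) (vecm n g j))"

lemma lookup_vecm: "Poly_Mapping.lookup (vecm n g j) k = (if k \<le> n then g k j else 0)"
  by (simp add: vecm_def lookup_sum lookup_single when_def sum.delta)

lemma lookup_linm: "Poly_Mapping.lookup (linm n g x) k = (if k \<le> n then (\<Sum>j\<le>n. Poly_Mapping.lookup x j * g k j) else 0)"
  by (simp add: linm_def lookup_sum lookup_vecm)

lemma linm_lin: "lin_on n (linm n g)"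
  unfolding lin_on_def
  by (auto intro!: poly_mapping_eqI simp: lookup_linm lookup_add algebra_simps sum.distrib sum_distrib_left)

lemma linm_Cspace: "linm n g x \<in> Cspace n"
  by (rule CspaceI) (simp add: lookup_linm)

lemma linm_inv:
  assumes inv: "mat_inverse_on {..n} g h" and x: "x \<in> Cspace n"
  shows "linm n h (linm n g x) = x"
proof (rule poly_mapping_eqI)
  fix k
  show "Poly_Mapping.lookup (linm n h (linm n g x)) k = Poly_Mapping.lookup x k"
  proof (cases "k \<le> n")
    case True
    have "(\<Sum>j\<le>n. (\<Sum>l\<le>n. Poly_Mapping.lookup x l * g j l) * h k j) = (\<Sum>j\<le>n. \<Sum>l\<le>n. Poly_Mapping.lookup x l * (h k j * g j l))"
      by (simp add: sum_distrib_right sum_distrib_left mult_ac)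
    also have "\<dots> = (\<Sum>l\<le>n. \<Sum>j\<le>n. Poly_Mapping.lookup x l * (h k j * g j l))"
      by (rule sum.swap)
    also have "\<dots> = (\<Sum>l\<le>n. Poly_Mapping.lookup x l * (if k = l then 1 else 0))"
      using inv True unfolding mat_inverse_on_def by (simp add: sum_distrib_left[symmetric])
    also have "\<dots> = Poly_Mapping.lookup x k" using True by (simp add: mult_if_delta sum.delta)
    finally show ?thesis using True by (simp add: lookup_linm)
  next
    case False then show ?thesis using x by (simp add: lookup_linm CspaceD)
  qed
qed

lemma phimat_linm: "j \<le> n \<Longrightarrow> k \<le> n \<Longrightarrow> phimat (linm n g) k j = g k j"
  by (simp add: phimat_def lookup_linm lookup_single when_def mult_if_delta delta_mult sum.delta)

lemma phimat_inverse:
  assumes lin: "lin_on n \<phi>" and bij: "bij_betw \<phi> (Cspace n) (Cspace n)"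
  shows "mat_inverse_on {..n} (phimat \<phi>) (phimat (inv_into (Cspace n) \<phi>))"
proof -
  let ?\<psi> = "inv_into (Cspace n) \<phi>"
  have linp: "lin_on n ?\<psi>" by (rule inv_lin[OF lin bij])
  have inC: "\<And>x. x \<in> Cspace n \<Longrightarrow> ?\<psi> x \<in> Cspace n"
    using bij by (metis bij_betw_def inv_into_into)
  have fi: "\<And>x. x \<in> Cspace n \<Longrightarrow> \<phi> (?\<psi> x) = x"
    using bij by (meson bij_betw_inv_into_right)
  have if': "\<And>x. x \<in> Cspace n \<Longrightarrow> ?\<psi> (\<phi> x) = x"
    using bij by (meson bij_betw_inv_into_left)
  show ?thesis unfolding mat_inverse_on_def
  proof (intro conjI ballI)
    fix r c assume r: "r \<in> {..n}" and c: "c \<in> {..n}"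
    have ec: "Poly_Mapping.single c 1 \<in> Cspace n" using c by (simp add: Cspace_single)
    have "Poly_Mapping.lookup (\<phi> (?\<psi> (Poly_Mapping.single c 1))) r = (\<Sum>k\<le>n. phimat \<phi> r k * phimat ?\<psi> k c)"
      by (simp add: lin_lookup[OF lin inC[OF ec]] phimat_def mult.commute)
    then show "(\<Sum>k\<in>{..n}. phimat \<phi> r k * phimat ?\<psi> k c) = (if r = c then 1 else 0)"
      using fi[OF ec] by (auto simp: lookup_single when_def split: if_splits)
    have bij_into: "\<And>x. x \<in> Cspace n \<Longrightarrow> \<phi> x \<in> Cspace n" using bij by (meson bij_betwE)
    have "Poly_Mapping.lookup (?\<psi> (\<phi> (Poly_Mapping.single c 1))) r = (\<Sum>k\<le>n. phimat ?\<psi> r k * phimat \<phi> k c)"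
      by (simp add: lin_lookup[OF linp bij_into[OF ec]] phimat_def mult.commute)
    then show "(\<Sum>k\<in>{..n}. phimat ?\<psi> r k * phimat \<phi> k c) = (if r = c then 1 else 0)"
      using if'[OF ec] by (auto simp: lookup_single when_def split: if_splits)
  qed
qed



theorem theorem6p6:
  fixes n :: nat and p p' :: "nat \<Rightarrow> nat \<Rightarrow> HR" and cs :: "nat list"
  assumes "prim_family n p" and "prim_family n p'"
    and "reduced_of_type n p cs" and "is_reduced n p'"
  shows "comod_iso n p p' \<longleftrightarrow>
           (reduced_of_type n p' cs \<and>
            (\<exists>g\<in>Gtype n cs. \<exists>h. mat_inverse_on {..n} g h \<and>
               (\<forall>r\<le>n. \<forall>c\<le>n. assoc_mat p' r c = conj_mat n g (assoc_mat p) h r c)))"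
proof -
  have red: "reduced_of_type n p cs" using assms(3) .
  obtain cs' where red': "reduced_of_type n p' cs'" using assms(4) is_reduced_def by blast
  show ?thesis
  proof
    assume "comod_iso n p p'"
    then obtain \<phi> where lin: "lin_on n \<phi>" and bij: "bij_betw \<phi> (Cspace n) (Cspace n)"
      and H: "\<forall>x\<in>Cspace n. coact p' (\<phi> x) = id_tens \<phi> (coact p x)"
      unfolding comod_iso_def by blast
    have maps: "\<And>x. x \<in> Cspace n \<Longrightarrow> \<phi> x \<in> Cspace n" using bij by (meson bij_betwE)
    define \<Phi> where "\<Phi> = phimat \<phi>"
    define \<Psi> where "\<Psi> = phimat (inv_into (Cspace n) \<phi>)"
    have inv: "mat_inverse_on {..n} \<Phi> \<Psi>" unfolding \<Phi>_def \<Psi>_def by (rule phimat_inverse[OF lin bij])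
    have C1: "\<forall>l\<le>n. \<forall>k\<le>n. (\<Sum>i\<le>n. scal (\<Phi> i l) (coef p' i k)) = (\<Sum>j\<le>n. scal (\<Phi> k j) (coef p l j))"
      using COMOD_IFF[OF lin maps] H unfolding \<Phi>_def by blast
    have M1: "\<And>l k. l \<le> n \<Longrightarrow> k \<le> n \<Longrightarrow> (\<Sum>i\<le>n. scal (\<Phi> i l) (Mm p' k i)) = (\<Sum>j\<le>n. scal (\<Phi> k j) (Mm p j l))"
      using C1 MPHI_conv by blast
    have M2: "\<And>k l. k \<le> n \<Longrightarrow> l \<le> n \<Longrightarrow> Mm p' k l = conj_mat n \<Phi> (Mm p) \<Psi> k l"
      using FWD_CONJ[OF inv M1] by blast
    have R1: "rel n (Mm p') (assoc_mat p')" by (rule MREC)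
    have R2: "rel n (Mm p') (conj_mat n \<Phi> (assoc_mat p) \<Psi>)"
      by (rule rel_cong[OF CONJ[OF inv MREC[of n p]]]) (simp_all add: M2)
    have P': "\<And>j i. j \<le> n \<Longrightarrow> i \<le> n \<Longrightarrow> assoc_mat p' j i = conj_mat n \<Phi> (assoc_mat p) \<Psi> j i"
      by (rule UNIQ2[OF R1 R2]) (simp_all add: Mm_def)
    have comm1: "\<And>r l. r \<le> n \<Longrightarrow> l \<le> n \<Longrightarrow> (\<Sum>k\<le>n. scal (\<Phi> k l) (assoc_mat p' r k)) = (\<Sum>k\<le>n. scal (\<Phi> r k) (assoc_mat p k l))"
      using BWD_CONJ[OF inv P'] by blast
    have P: "\<And>j i. j \<le> n \<Longrightarrow> i \<le> n \<Longrightarrow> assoc_mat p j i = conj_mat n \<Psi> (assoc_mat p') \<Phi> j i"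
      using SYM[OF inv P'] by blast
    have comm2: "\<And>r l. r \<le> n \<Longrightarrow> l \<le> n \<Longrightarrow> (\<Sum>k\<le>n. scal (\<Psi> k l) (assoc_mat p r k)) = (\<Sum>k\<le>n. scal (\<Psi> r k) (assoc_mat p' k l))"
      using BWD_CONJ[OF inv_sym[OF inv] P] by blast
    have T1: "\<And>m j k. j \<le> n \<Longrightarrow> j < bstart cs m \<Longrightarrow> k \<le> n \<Longrightarrow> bstart cs' m \<le> k \<Longrightarrow> \<Phi> k j = 0"
      using TRANS[OF red red' comm1] by blast
    have T2: "\<And>m j k. j \<le> n \<Longrightarrow> j < bstart cs' m \<Longrightarrow> k \<le> n \<Longrightarrow> bstart cs m \<le> k \<Longrightarrow> \<Psi> k j = 0"
      using TRANS[OF red' red comm2] by blast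
    have sn: "sum_list cs = Suc n" "sum_list cs' = Suc n"
      using red red' by (simp_all add: reduced_of_type_def is_type_def)
    have bs: "\<forall>m. bstart cs m = bstart cs' m"
    proof
      fix m
      have a: "bstart cs m \<le> Suc n" and b: "bstart cs' m \<le> Suc n"
        using bstart_le_sum[of cs m] bstart_le_sum[of cs' m] sn by auto
      show "bstart cs m = bstart cs' m"
      proof (rule TRACE[OF inv a b])
        fix j k assume "j < bstart cs m" "k \<le> n" "bstart cs' m \<le> k"
        then show "\<Phi> k j = 0" using T1[of j m k] a by simp
      next
        fix j k assume "j < bstart cs' m" "k \<le> n" "bstart cs m \<le> k"
        then show "\<Psi> k j = 0" using T2[of j m k] b by simp
      qed
    qed
    have cseq: "cs' = cs"
      using list_eq_by_bstart[of cs' cs] red red' bs unfolding reduced_of_type_def is_type_def by auto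
    have T1': "\<And>m j k. j \<le> n \<Longrightarrow> j < bstart cs m \<Longrightarrow> k \<le> n \<Longrightarrow> bstart cs m \<le> k \<Longrightarrow> \<Phi> k j = 0"
      using T1 cseq by simp
    have T2': "\<And>m j k. j \<le> n \<Longrightarrow> j < bstart cs m \<Longrightarrow> k \<le> n \<Longrightarrow> bstart cs m \<le> k \<Longrightarrow> \<Psi> k j = 0"
      using T2 cseq by simp
    have blk_n: "\<And>a x. x \<in> blk cs a \<Longrightarrow> x \<le> n"
    proof -
      fix a x assume "x \<in> blk cs a"
      then have "x < bstart cs (Suc a)" by (simp add: blk_def)
      then show "x \<le> n" using bstart_le_sum[of cs "Suc a"] sn by simp
    qed
    have low: "\<forall>a<length cs. \<forall>b<length cs. b < a \<longrightarrow> (\<forall>r\<in>blk cs a. \<forall>c\<in>blk cs b. \<Phi> r c = 0)"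
    proof (intro allI impI ballI)
      fix a b r c assume a: "a < length cs" and b: "b < length cs" and ba: "b < a" and r: "r \<in> blk cs a" and c: "c \<in> blk cs b"
      have "bstart cs (Suc b) \<le> bstart cs a" using ba by (intro bstart_mono) simp
      then have "bstart cs (Suc b) \<le> r" using r by (simp add: blk_def)
      moreover have "c < bstart cs (Suc b)" using c by (simp add: blk_def)
      ultimately show "\<Phi> r c = 0" using T1'[of c "Suc b" r] blk_n r c by blast
    qed
    have diag: "\<forall>a<length cs. \<exists>h. mat_inverse_on (blk cs a) \<Phi> h"
    proof (intro allI impI exI[of _ \<Psi>])
      fix a assume a: "a < length cs"
      have sub: "blk cs a \<subseteq> {..n}" using blk_n by auto
      show "mat_inverse_on (blk cs a) \<Phi> \<Psi>"
        unfolding mat_inverse_on_def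
      proof (intro conjI ballI)
        fix r c assume r: "r \<in> blk cs a" and c: "c \<in> blk cs a"
        have "(\<Sum>k\<in>blk cs a. \<Phi> r k * \<Psi> k c) = (\<Sum>k\<le>n. \<Phi> r k * \<Psi> k c)"
        proof (rule sum.mono_neutral_left)
          show "\<forall>k\<in>{..n} - blk cs a. \<Phi> r k * \<Psi> k c = 0"
          proof
            fix k assume k: "k \<in> {..n} - blk cs a"
            show "\<Phi> r k * \<Psi> k c = 0"
            proof (cases "k < bstart cs a")
              case True
              then have "\<Phi> r k = 0" using T1'[of k a r] r k blk_n by (auto simp: blk_def)
              then show ?thesis by simp
            next
              case False
              then have "bstart cs (Suc a) \<le> k" using k by (auto simp: blk_def)
              then have "\<Psi> k c = 0" using T2'[of c "Suc a" k] c k blk_n by (auto simp: blk_def)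
              then show ?thesis by simp
            qed
          qed
        qed (use sub in auto)
        also have "\<dots> = (if r = c then 1 else 0)" using inv blk_n[OF r] blk_n[OF c] unfolding mat_inverse_on_def by simp
        finally show "(\<Sum>k\<in>blk cs a. \<Phi> r k * \<Psi> k c) = (if r = c then 1 else 0)" .
        have "(\<Sum>k\<in>blk cs a. \<Psi> r k * \<Phi> k c) = (\<Sum>k\<le>n. \<Psi> r k * \<Phi> k c)"
        proof (rule sum.mono_neutral_left)
          show "\<forall>k\<in>{..n} - blk cs a. \<Psi> r k * \<Phi> k c = 0"
          proof
            fix k assume k: "k \<in> {..n} - blk cs a"
            show "\<Psi> r k * \<Phi> k c = 0"
            proof (cases "k < bstart cs a")
              case True
              then have "\<Psi> r k = 0" using T2'[of k a r] r k blk_n by (auto simp: blk_def)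
              then show ?thesis by simp
            next
              case False
              then have "bstart cs (Suc a) \<le> k" using k by (auto simp: blk_def)
              then have "\<Phi> k c = 0" using T1'[of c "Suc a" k] c k blk_n by (auto simp: blk_def)
              then show ?thesis by simp
            qed
          qed
        qed (use sub in auto)
        also have "\<dots> = (if r = c then 1 else 0)" using inv blk_n[OF r] blk_n[OF c] unfolding mat_inverse_on_def by simp
        finally show "(\<Sum>k\<in>blk cs a. \<Psi> r k * \<Phi> k c) = (if r = c then 1 else 0)" .
      qed
    qed
    have G: "\<Phi> \<in> Gtype n cs"
      unfolding Gtype_def using inv low diag by blast
    show "reduced_of_type n p' cs \<and> (\<exists>g\<in>Gtype n cs. \<exists>h. mat_inverse_on {..n} g h \<and>
               (\<forall>r\<le>n. \<forall>c\<le>n. assoc_mat p' r c = conj_mat n g (assoc_mat p) h r c))"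
      using red' cseq G inv P' by blast
  next
    assume "reduced_of_type n p' cs \<and> (\<exists>g\<in>Gtype n cs. \<exists>h. mat_inverse_on {..n} g h \<and>
               (\<forall>r\<le>n. \<forall>c\<le>n. assoc_mat p' r c = conj_mat n g (assoc_mat p) h r c))"
    then obtain g h where inv: "mat_inverse_on {..n} g h"
      and P': "\<forall>r\<le>n. \<forall>c\<le>n. assoc_mat p' r c = conj_mat n g (assoc_mat p) h r c" by blast
    define \<phi> where "\<phi> = linm n g"
    have lin: "lin_on n \<phi>" unfolding \<phi>_def by (rule linm_lin)
    have maps: "\<And>x. \<phi> x \<in> Cspace n" unfolding \<phi>_def by (rule linm_Cspace)
    have bij: "bij_betw \<phi> (Cspace n) (Cspace n)"
      by (rule bij_betw_byWitness[where f'="linm n h"])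
        (auto simp: \<phi>_def linm_inv[OF inv] linm_inv[OF inv_sym[OF inv]] linm_Cspace)
    have R2: "rel n (conj_mat n g (Mm p) h) (assoc_mat p')"
      by (rule rel_cong[OF CONJ[OF inv MREC[of n p]]]) (simp_all add: P')
    have MM: "\<And>j i. j \<le> n \<Longrightarrow> i \<le> n \<Longrightarrow> Mm p' j i = conj_mat n g (Mm p) h j i"
      by (rule UNIQ1[OF MREC R2]) (simp_all add: assoc_mat_def)
    have M1: "(\<Sum>i\<le>n. scal (phimat \<phi> i l) (Mm p' k i)) = (\<Sum>j\<le>n. scal (phimat \<phi> k j) (Mm p j l))"
      if l: "l \<le> n" and k: "k \<le> n" for l k
    proof -
      have "(\<Sum>i\<le>n. scal (phimat \<phi> i l) (Mm p' k i)) = (\<Sum>i\<le>n. scal (g i l) (Mm p' k i))"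
        by (rule sum.cong) (simp_all add: \<phi>_def phimat_linm l)
      also have "\<dots> = (\<Sum>j\<le>n. scal (g k j) (Mm p j l))"
        by (rule BWD_CONJ[OF inv MM k l])
      also have "\<dots> = (\<Sum>j\<le>n. scal (phimat \<phi> k j) (Mm p j l))"
        by (rule sum.cong) (simp_all add: \<phi>_def phimat_linm k)
      finally show ?thesis .
    qed
    have "\<forall>x\<in>Cspace n. coact p' (\<phi> x) = id_tens \<phi> (coact p x)"
      unfolding COMOD_IFF[OF lin maps]
      using M1 MPHI_conv by blast
    then show "comod_iso n p p'" unfolding comod_iso_def using lin bij by blast
  qed
qed


end
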